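(* Let $G_0$ be the group of homeomorphisms of $\mathbb{R}$ defined in the context. The finite-index subgroups of $G_0$ are in bijection with the finite-index subgroups of $\mathbb{Z}^3$ (the abelianization of $G_0$). Every subgroup $K$ of finite index in $G_0$ is normal, and $K'=G_0'$.
   Context: $G_0$ is the group of homeomorphisms of $\mathbb{R}$ generated by the following maps: - $a(t)=t+1$; - $b$, where $b(t)=t$ for $t\le 0$, $b(t)=t/(1-t)$ for $0\le t\le 1/2$, $b(t)=(3t-1)/t$ for $1/2\le t\le 1$, and $b(t)=t+1$ for $t\ge 1$; - $c$, where $c(t)=2t/(t+1)$ for $0\le t\le 1$ and $c(t)=t$ otherwise. The abelianization $G_0/G_0'$ is isomorphic to $\mathbb{Z}^3$ via $a\mapsto(1,0,0)$, $b\mapsto(0,1,0)$, $c\mapsto(0,0,1)$. Primes denote commutator subgroups. *)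

theory Defs
  imports Complex_Main "HOL-Algebra.Algebra"
begin

definition gen_a :: "real \<Rightarrow> real" where
  "gen_a t = t + 1"

definition gen_b :: "real \<Rightarrow> real" where
  "gen_b t = (if t \<le> 0 then t
              else if t \<le> 1/2 then t / (1 - t)
              else if t \<le> 1 then (3*t - 1) / t
              else t + 1)"

definition gen_c :: "real \<Rightarrow> real" where
  "gen_c t = (if 0 \<le> t \<and> t \<le> 1 then 2*t / (t + 1) else t)"

definition G0 :: "(real \<Rightarrow> real) monoid" where
  "G0 = (BijGroup (UNIV :: real set))
          \<lparr>carrier := generate (BijGroup (UNIV :: real set)) {gen_a, gen_b, gen_c}\<rparr>"

definition Z3 :: "(int \<times> int \<times> int) monoid" where
  "Z3 = \<lparr>partial_object.carrier = UNIV,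
         monoid.mult = (\<lambda>x y. (fst x + fst y, fst (snd x) + fst (snd y), snd (snd x) + snd (snd y))),
         monoid.one = (0, 0, 0)\<rparr>"

definition fin_index_subgroup :: "('a, 'b) monoid_scheme \<Rightarrow> 'a set \<Rightarrow> bool" where
  "fin_index_subgroup G K \<longleftrightarrow> subgroup K G \<and> finite (rcosets\<^bsub>G\<^esub> K)"

end

theory Submission
  imports Defs
begin

abbreviation BR :: "(real \<Rightarrow> real) monoid" where "BR \<equiv> BijGroup (UNIV::real set)"

lemma carrier_BR: "carrier BR = {f. bij f}"
  by (auto simp: BijGroup_def Bij_def bij_betw_def)

lemma mult_BR: "bij x \<Longrightarrow> bij y \<Longrightarrow> x \<otimes>\<^bsub>BR\<^esub> y = x \<circ> y"
  by (auto simp: BijGroup_def compose_def o_def restrict_def Bij_def bij_betw_def)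

lemma one_BR: "\<one>\<^bsub>BR\<^esub> = id"
  by (simp add: BijGroup_def id_def restrict_def)

lemma inv_BR: "bij f \<Longrightarrow> m_inv BR f = inv_into UNIV f"
  by (subst inv_BijGroup) (auto simp: Bij_def bij_betw_def)

lemma bij_a: "bij gen_a"
  unfolding gen_a_def by (rule bij_betwI[where g="\<lambda>t. t - 1"]) auto

definition binv :: "real \<Rightarrow> real" where
  "binv t = (if t \<le> 0 then t else if t \<le> 1 then t / (1 + t) else if t \<le> 2 then 1 / (3 - t) else t - 1)"

definition cinv :: "real \<Rightarrow> real" where
  "cinv t = (if 0 \<le> t \<and> t \<le> 1 then t / (2 - t) else t)"

lemma b_binv: "gen_b (binv t) = t"
proof -
  consider "t \<le> 0" | "0 < t" "t \<le> 1" | "1 < t" "t \<le> 2" | "2 < t" by linarith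
  then show ?thesis
  proof cases
    case 2
    have "t / (1 + t) \<le> 1/2" using 2 by (simp add: field_simps)
    moreover have "0 < t / (1+t)" using 2 by simp
    ultimately show ?thesis using 2 by (simp add: binv_def gen_b_def field_simps)
  next
    case 3
    have "1/2 < 1 / (3 - t)" using 3 by (simp add: field_simps)
    moreover have "1 / (3 - t) \<le> 1" using 3 by (simp add: field_simps)
    ultimately show ?thesis using 3 by (simp add: binv_def gen_b_def field_simps)
  qed (auto simp: binv_def gen_b_def)
qed

lemma binv_b: "binv (gen_b t) = t"
proof -
  consider "t \<le> 0" | "0 < t" "t \<le> 1/2" | "1/2 < t" "t \<le> 1" | "1 < t" by linarith
  then show ?thesis
  proof cases
    case 2
    have "t / (1 - t) \<le> 1" using 2 by (simp add: field_simps)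
    moreover have "0 < t / (1-t)" using 2 by simp
    ultimately show ?thesis using 2 by (simp add: binv_def gen_b_def field_simps)
  next
    case 3
    have "1 < (3*t-1) / t" using 3 by (simp add: field_simps)
    moreover have "(3*t-1) / t \<le> 2" using 3 by (simp add: field_simps)
    ultimately show ?thesis using 3 by (simp add: binv_def gen_b_def field_simps)
  qed (auto simp: binv_def gen_b_def)
qed

lemma c_cinv: "gen_c (cinv t) = t"
proof (cases "0 \<le> t \<and> t \<le> 1")
  case True
  have "0 \<le> t / (2 - t)" "t / (2 - t) \<le> 1" using True by (auto simp: field_simps)
  then show ?thesis using True by (simp add: cinv_def gen_c_def field_simps)
qed (auto simp: cinv_def gen_c_def)

lemma cinv_c: "cinv (gen_c t) = t"
proof (cases "0 \<le> t \<and> t \<le> 1")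
  case True
  have "0 \<le> 2*t / (t+1)" "2*t / (t+1) \<le> 1" using True by (auto simp: field_simps)
  then show ?thesis using True by (simp add: cinv_def gen_c_def field_simps)
qed (auto simp: cinv_def gen_c_def)

lemma bij_b: "bij gen_b" by (rule bij_betwI[where g=binv]) (auto simp: b_binv binv_b)
lemma bij_c: "bij gen_c" by (rule bij_betwI[where g=cinv]) (auto simp: c_cinv cinv_c)
lemma inv_b: "inv_into UNIV gen_b = binv" by (rule inv_equality) (auto simp: b_binv binv_b)
lemma inv_c: "inv_into UNIV gen_c = cinv" by (rule inv_equality) (auto simp: c_cinv cinv_c)
lemma inv_a: "inv_into UNIV gen_a = (\<lambda>t. t - 1)" by (rule inv_equality) (auto simp: gen_a_def)


context group begin

lemma canc1: "x \<in> carrier G \<Longrightarrow> z \<in> carrier G \<Longrightarrow> inv x \<otimes> (x \<otimes> z) = z"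
  by (simp add: m_assoc[symmetric])
lemma canc2: "x \<in> carrier G \<Longrightarrow> z \<in> carrier G \<Longrightarrow> x \<otimes> (inv x \<otimes> z) = z"
  by (simp add: m_assoc[symmetric])

abbreviation cm where "cm x y \<equiv> x \<otimes> y \<otimes> inv x \<otimes> inv y"

lemma cN_sym:
  assumes N: "N \<lhd> G" and xy: "x \<in> carrier G" "y \<in> carrier G" and c: "cm x y \<in> N"
  shows "cm y x \<in> N"
proof -
  interpret normal N G by fact
  have "inv (cm x y) = cm y x" using xy by (simp add: inv_mult_group m_assoc)
  then show ?thesis using c by (metis m_inv_closed)
qed

lemma cN_mult_left:
  assumes N: "N \<lhd> G" and xy: "x1 \<in> carrier G" "x2 \<in> carrier G" "y \<in> carrier G"
    and c1: "cm x1 y \<in> N" and c2: "cm x2 y \<in> N"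
  shows "cm (x1 \<otimes> x2) y \<in> N"
proof -
  interpret normal N G by fact
  have e: "cm (x1 \<otimes> x2) y = (x1 \<otimes> cm x2 y \<otimes> inv x1) \<otimes> cm x1 y"
    using xy by (simp add: inv_mult_group m_assoc canc1 canc2)
  have "x1 \<otimes> cm x2 y \<otimes> inv x1 \<in> N" using inv_op_closed2 xy c2 by blast
  then show ?thesis unfolding e using c1 by blast
qed

lemma cN_inv_left:
  assumes N: "N \<lhd> G" and xy: "x \<in> carrier G" "y \<in> carrier G" and c: "cm x y \<in> N"
  shows "cm (inv x) y \<in> N"
proof -
  interpret normal N G by fact
  have e: "cm (inv x) y = inv x \<otimes> cm y x \<otimes> inv (inv x)"
    using xy by (simp add: inv_mult_group m_assoc canc1 canc2)
  show ?thesis unfolding e using inv_op_closed2 xy cN_sym[OF N xy c] by blast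
qed

lemma cN_commute:
  assumes N: "N \<lhd> G" and xy: "x \<in> carrier G" "y \<in> carrier G" and c: "x \<otimes> y = y \<otimes> x"
  shows "cm x y \<in> N"
proof -
  interpret normal N G by fact
  have "cm x y = \<one>" using xy c by (simp add: m_assoc canc1 canc2)
  then show ?thesis by simp
qed

lemma cN_of_N:
  assumes N: "N \<lhd> G" and xy: "x \<in> carrier G" "y \<in> carrier G" and c: "x \<in> N"
  shows "cm x y \<in> N"
proof -
  interpret normal N G by fact
  have e: "cm x y = x \<otimes> (y \<otimes> inv x \<otimes> inv y)" using xy by (simp add: m_assoc)
  have "y \<otimes> inv x \<otimes> inv y \<in> N" using inv_op_closed2 xy c by blast
  then show ?thesis unfolding e using c by blast
qed

lemma cN_decomp:
  assumes N: "N \<lhd> G" and xy: "x' \<in> carrier G" "w \<in> carrier G" "y \<in> carrier G"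
    and c1: "x' \<otimes> y = y \<otimes> x'" and c2: "cm w y \<in> N"
  shows "cm (x' \<otimes> w) y \<in> N"
  using cN_mult_left[OF N xy cN_commute[OF N xy(1,3) c1] c2] .

lemma derived_le_normal:
  assumes N: "N \<lhd> G" and S: "S \<subseteq> carrier G" and gen: "generate G S = carrier G"
    and c: "\<And>s t. s \<in> S \<Longrightarrow> t \<in> S \<Longrightarrow> cm s t \<in> N"
  shows "derived G (carrier G) \<subseteq> N"
proof -
  interpret normal N G by fact
  have Sc: "\<And>s. s \<in> S \<Longrightarrow> s \<in> carrier G" using S by blast
  have gc: "\<And>x. x \<in> generate G S \<Longrightarrow> x \<in> carrier G" using gen by simp
  have one: "\<And>y. y \<in> carrier G \<Longrightarrow> cm \<one> y \<in> N" using cN_commute[OF N] by simp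
  have step1: "cm x s \<in> N" if "x \<in> carrier G" "s \<in> S" for x s
  proof -
    have sc: "s \<in> carrier G" using Sc that(2) .
    have "x \<in> generate G S" using gen that by simp
    then show ?thesis
    proof (induction x rule: generate.induct)
      case one then show ?case using sc by (simp add: one)
    next
      case (incl h) then show ?case using c that(2) by simp
    next
      case (inv h) then show ?case using cN_inv_left[OF N Sc[OF inv(1)] sc c[OF inv(1) that(2)]] by simp
    next
      case (eng h1 h2)
      then show ?case using cN_mult_left[OF N gc[OF eng(1)] gc[OF eng(2)] sc] by simp
    qed
  qed
  have step2: "cm x y \<in> N" if "x \<in> carrier G" "y \<in> carrier G" for x y
  proof -
    have "x \<in> generate G S" using gen that by simp
    then show ?thesis
    proof (induction x rule: generate.induct)
      case one then show ?case using that(2) by (simp add: one)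
    next
      case (incl h) then show ?case using cN_sym[OF N that(2) Sc[OF incl] step1[OF that(2) incl]] by simp
    next
      case (inv h) then show ?case
        using cN_inv_left[OF N Sc[OF inv] that(2) cN_sym[OF N that(2) Sc[OF inv] step1[OF that(2) inv]]] by simp
    next
      case (eng h1 h2)
      then show ?case using cN_mult_left[OF N gc[OF eng(1)] gc[OF eng(2)] that(2)] by simp
    qed
  qed
  have "derived_set G (carrier G) \<subseteq> N"
  proof
    fix z assume "z \<in> derived_set G (carrier G)"
    then obtain x y where "x \<in> carrier G" "y \<in> carrier G" "z = cm x y" by blast
    then show "z \<in> N" using step2 by simp
  qed
  then show ?thesis unfolding derived_def
    by (rule generate_subgroup_incl) (rule subgroup_axioms)
qed

end

abbreviation gens :: "(real \<Rightarrow> real) set" where "gens \<equiv> {gen_a, gen_b, gen_c}"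

lemma gens_BR: "gens \<subseteq> carrier BR" using bij_a bij_b bij_c carrier_BR by auto

lemma grpBR: "group BR" by (rule group_BijGroup)

lemma carrier_G0: "carrier G0 = generate BR gens" by (simp add: G0_def)

lemma sub_G0: "subgroup (carrier G0) BR"
  unfolding carrier_G0 by (rule group.generate_is_subgroup[OF grpBR gens_BR])

lemma G0_eq: "G0 = BR\<lparr>carrier := carrier G0\<rparr>" by (simp add: G0_def)

lemma grp: "group G0"
  by (subst G0_eq) (rule group.subgroup_imp_group[OF grpBR sub_G0])

lemma G0_bij: "x \<in> carrier G0 \<Longrightarrow> bij x"
  using subgroup.subset[OF sub_G0] carrier_BR by auto

lemma mult_G0: "x \<in> carrier G0 \<Longrightarrow> y \<in> carrier G0 \<Longrightarrow> x \<otimes>\<^bsub>G0\<^esub> y = x \<circ> y"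
  using G0_bij mult_BR by (simp add: G0_def)

lemma one_G0: "\<one>\<^bsub>G0\<^esub> = id" using one_BR by (simp add: G0_def)

lemma inv_G0: "x \<in> carrier G0 \<Longrightarrow> inv\<^bsub>G0\<^esub> x = inv_into UNIV x"
proof -
  assume x: "x \<in> carrier G0"
  have "inv\<^bsub>G0\<^esub> x = inv\<^bsub>BR\<^esub> x"
    by (subst G0_eq, rule group.m_inv_consistent[OF grpBR sub_G0 x])
  then show ?thesis using inv_BR G0_bij x by simp
qed

lemma gen_G0: "generate G0 gens = carrier G0"
  using group.generate_consistent[OF grpBR _ sub_G0, of gens] carrier_G0 G0_eq
  by (metis generate.incl subsetI)

lemma gens_G0: "gen_a \<in> carrier G0" "gen_b \<in> carrier G0" "gen_c \<in> carrier G0"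
  unfolding carrier_G0 by (auto intro: generate.incl)

lemma invgens_G0: "(\<lambda>t. t - 1) \<in> carrier G0" "binv \<in> carrier G0" "cinv \<in> carrier G0"
proof -
  have "inv\<^bsub>G0\<^esub> g \<in> carrier G0" if "g \<in> carrier G0" for g using grp that by (simp add: group.inv_closed)
  then show "(\<lambda>t. t - 1) \<in> carrier G0" "binv \<in> carrier G0" "cinv \<in> carrier G0"
    using gens_G0 inv_G0 inv_a inv_b inv_c by metis+
qed

definition tau :: "int \<Rightarrow> real \<Rightarrow> real" where "tau n = (\<lambda>t. t + of_int n)"

lemma tau_G0: "tau n \<in> carrier G0"
proof (induction n rule: int_induct[where k=0])
  case base then show ?case using monoid.one_closed[OF group.is_monoid[OF grp]] one_G0 by (simp add: tau_def id_def)
next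
  case (step1 i)
  have "gen_a \<circ> tau i = tau (i+1)" by (auto simp: tau_def gen_a_def)
  then show ?case using mult_G0[OF gens_G0(1) step1(2)] monoid.m_closed[OF group.is_monoid[OF grp] gens_G0(1) step1(2)] by simp
next
  case (step2 i)
  have "(\<lambda>t. t - 1) \<circ> tau i = tau (i-1)" by (auto simp: tau_def)
  then show ?case using mult_G0[OF invgens_G0(1) step2(2)] monoid.m_closed[OF group.is_monoid[OF grp] invgens_G0(1) step2(2)] by simp
qed

lemma inv_tau: "inv_into UNIV (tau n) = tau (-n)"
  by (rule inv_equality) (auto simp: tau_def)

lemma comm_split:
  fixes f g :: "real \<Rightarrow> real"
  assumes "inj f" "inj g" "\<And>t. t \<ge> m \<Longrightarrow> f t = t" "\<And>t. t \<le> m \<Longrightarrow> g t = t"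
  shows "f \<circ> g = g \<circ> f"
proof
  fix t
  show "(f \<circ> g) t = (g \<circ> f) t"
  proof (cases "t \<le> m")
    case True
    have "f t \<le> m"
    proof (rule ccontr)
      assume "\<not> f t \<le> m"
      then have "f (f t) = f t" using assms(3) by simp
      then have "f t = t" using assms(1) by (simp add: inj_eq)
      then show False using True \<open>\<not> f t \<le> m\<close> by simp
    qed
    then show ?thesis using True assms(4) by simp
  next
    case False
    have "g t \<ge> m"
    proof (rule ccontr)
      assume "\<not> g t \<ge> m"
      then have "g (g t) = g t" using assms(4) by simp
      then have "g t = t" using assms(2) by (simp add: inj_eq)
      then show False using False \<open>\<not> g t \<ge> m\<close> by simp
    qed
    then show ?thesis using False assms(3) by simp
  qed
qed

lemma inv_id_ge:
  assumes "bij f" "\<And>t. t \<ge> m \<Longrightarrow> f t = t" "t \<ge> m"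
  shows "inv_into UNIV f t = t"
  using assms by (metis bij_inv_eq_iff)

lemma inv_id_le:
  assumes "bij f" "\<And>t. t \<le> m \<Longrightarrow> f t = t" "t \<le> m"
  shows "inv_into UNIV f t = t"
  using assms by (metis bij_inv_eq_iff)


abbreviation C0 where "C0 \<equiv> carrier G0"

definition fc :: "(real \<Rightarrow> real) \<Rightarrow> (real \<Rightarrow> real) \<Rightarrow> real \<Rightarrow> real" where
  "fc x y = x \<circ> y \<circ> inv_into UNIV x \<circ> inv_into UNIV y"

lemma compC: "x \<in> C0 \<Longrightarrow> y \<in> C0 \<Longrightarrow> x \<circ> y \<in> C0"
  using mult_G0 monoid.m_closed[OF group.is_monoid[OF grp]] by metis

lemma invC: "x \<in> C0 \<Longrightarrow> inv_into UNIV x \<in> C0"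
  using inv_G0 group.inv_closed[OF grp] by metis

lemma cmG0: "x \<in> C0 \<Longrightarrow> y \<in> C0 \<Longrightarrow>
   x \<otimes>\<^bsub>G0\<^esub> y \<otimes>\<^bsub>G0\<^esub> inv\<^bsub>G0\<^esub> x \<otimes>\<^bsub>G0\<^esub> inv\<^bsub>G0\<^esub> y = fc x y"
  by (simp add: mult_G0 inv_G0 compC invC fc_def)

lemma fN_sym: "N \<lhd> G0 \<Longrightarrow> x \<in> C0 \<Longrightarrow> y \<in> C0 \<Longrightarrow> fc x y \<in> N \<Longrightarrow> fc y x \<in> N"
  using group.cN_sym[OF grp, of N x y] cmG0 by simp

lemma fN_mult_left: "N \<lhd> G0 \<Longrightarrow> x1 \<in> C0 \<Longrightarrow> x2 \<in> C0 \<Longrightarrow> y \<in> C0 \<Longrightarrow> fc x1 y \<in> N \<Longrightarrow> fc x2 y \<in> N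
   \<Longrightarrow> fc (x1 \<circ> x2) y \<in> N"
  using group.cN_mult_left[OF grp, of N x1 x2 y] cmG0 compC mult_G0 by simp

lemma fN_commute: "N \<lhd> G0 \<Longrightarrow> x \<in> C0 \<Longrightarrow> y \<in> C0 \<Longrightarrow> x \<circ> y = y \<circ> x \<Longrightarrow> fc x y \<in> N"
proof -
  assume N: "N \<lhd> G0" and x: "x \<in> C0" and y: "y \<in> C0" and e: "x \<circ> y = y \<circ> x"
  have "x \<otimes>\<^bsub>G0\<^esub> y = y \<otimes>\<^bsub>G0\<^esub> x" using mult_G0[OF x y] mult_G0[OF y x] e by simp
  from group.cN_commute[OF grp N x y this] show ?thesis unfolding cmG0[OF x y] .
qed

lemma fN_of_N: "N \<lhd> G0 \<Longrightarrow> x \<in> C0 \<Longrightarrow> y \<in> C0 \<Longrightarrow> x \<in> N \<Longrightarrow> fc x y \<in> N"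
  using group.cN_of_N[OF grp, of N x y] cmG0 by simp

lemma fN_derived: "N \<lhd> G0 \<Longrightarrow> (\<And>s t. s \<in> gens \<Longrightarrow> t \<in> gens \<Longrightarrow> fc s t \<in> N) \<Longrightarrow> derived G0 C0 \<subseteq> N"
proof -
  assume N: "N \<lhd> G0" and h: "\<And>s t. s \<in> gens \<Longrightarrow> t \<in> gens \<Longrightarrow> fc s t \<in> N"
  have sub: "gens \<subseteq> C0" using gens_G0 by auto
  show ?thesis
  proof (rule group.derived_le_normal[OF grp N sub gen_G0])
    fix s t assume st: "s \<in> gens" "t \<in> gens"
    have sc: "s \<in> C0" "t \<in> C0" using sub st by auto
    show "s \<otimes>\<^bsub>G0\<^esub> t \<otimes>\<^bsub>G0\<^esub> inv\<^bsub>G0\<^esub> s \<otimes>\<^bsub>G0\<^esub> inv\<^bsub>G0\<^esub> t \<in> N"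
      unfolding cmG0[OF sc] by (rule h[OF st])
  qed
qed

definition cj :: "(real \<Rightarrow> real) \<Rightarrow> (real \<Rightarrow> real) \<Rightarrow> real \<Rightarrow> real" where
  "cj k x = k \<circ> x \<circ> inv_into UNIV k"
definition wv :: "(real \<Rightarrow> real) \<Rightarrow> (real \<Rightarrow> real) \<Rightarrow> real \<Rightarrow> real" where
  "wv k x = inv_into UNIV (cj k x) \<circ> x"

lemma cjC: "k \<in> C0 \<Longrightarrow> x \<in> C0 \<Longrightarrow> cj k x \<in> C0" by (simp add: cj_def compC invC)
lemma wvC: "k \<in> C0 \<Longrightarrow> x \<in> C0 \<Longrightarrow> wv k x \<in> C0" by (simp add: wv_def cjC compC invC)

lemma wv_eq: "k \<in> C0 \<Longrightarrow> x \<in> C0 \<Longrightarrow> wv k x = fc k (inv_into UNIV x)"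
proof -
  assume k: "k \<in> C0" and x: "x \<in> C0"
  have bk: "bij k" and bx: "bij x" using k x G0_bij by auto
  have "inv_into UNIV (cj k x) = inv_into UNIV (inv_into UNIV k) \<circ> inv_into UNIV x \<circ> inv_into UNIV k"
    unfolding cj_def using bk bx by (simp add: o_inv_distrib bij_imp_bij_inv o_assoc bij_comp)
  then show ?thesis using bk bx by (simp add: wv_def fc_def inv_inv_eq o_assoc)
qed

lemma cj_split: "cj k x \<circ> inv_into UNIV (cj k x) = id" if "k \<in> C0" "x \<in> C0"
  using cjC[OF that] G0_bij by (meson bij_is_surj surj_iff)

lemma decomp: "k \<in> C0 \<Longrightarrow> x \<in> C0 \<Longrightarrow> cj k x \<circ> wv k x = x"
  using cj_split unfolding wv_def by (metis comp_id o_assoc fun.map_id)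

lemma tau_app: "tau n t = t + of_int n" by (simp add: tau_def)
lemma inv_tau': "inv_into UNIV (tau n) = tau (-n)" by (rule inv_tau)

lemma c_id: "t \<le> 0 \<Longrightarrow> gen_c t = t" "t \<ge> 1 \<Longrightarrow> gen_c t = t" by (auto simp: gen_c_def)
lemma b_id: "t \<le> 0 \<Longrightarrow> gen_b t = t" by (auto simp: gen_b_def)
lemma b_tr: "t \<ge> 1 \<Longrightarrow> gen_b t = t + 1" by (auto simp: gen_b_def)
lemma binv_id: "t \<le> 0 \<Longrightarrow> binv t = t" by (auto simp: binv_def)
lemma binv_tr: "t \<ge> 2 \<Longrightarrow> binv t = t - 1" by (auto simp: binv_def)

lemma bijC: "x \<in> C0 \<Longrightarrow> inj x" using G0_bij bij_is_inj by blast

lemma gens_comm_mod: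
  assumes N: "N \<lhd> G0" and s: "s \<ge> 2"
    and h1: "fc (wv (tau (-s)) gen_c) gen_b \<in> N"
    and h2: "fc (wv (tau (-s)) (gen_a \<circ> binv)) gen_b \<in> N"
    and h3: "fc (wv (tau s) gen_c) (binv \<circ> gen_a) \<in> N"
  shows "derived G0 C0 \<subseteq> N"
proof -
  note gC = gens_G0 invgens_G0 tau_G0
  have aC: "gen_a \<circ> binv \<in> C0" "binv \<circ> gen_a \<in> C0" using gC compC by auto
  have u_comm: "cj (tau (-s)) gen_c \<circ> gen_b = gen_b \<circ> cj (tau (-s)) gen_c"
  proof (rule comm_split[where m=0])
    show "inj (cj (tau (-s)) gen_c)" using cjC gC bijC by blast
    show "inj gen_b" using bij_b bij_is_inj by blast
    show "cj (tau (- s)) gen_c t = t" if "0 \<le> t" for t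
      using that s by (simp add: cj_def inv_tau' tau_app c_id)
    show "gen_b t = t" if "t \<le> 0" for t using that b_id by simp
  qed
  have cb: "fc gen_c gen_b \<in> N"
    using fN_mult_left[OF N cjC wvC gC(2) fN_commute[OF N cjC gC(2) u_comm] h1] decomp gC by (simp add: gC)
  have x_comm: "cj (tau (-s)) (gen_a \<circ> binv) \<circ> gen_b = gen_b \<circ> cj (tau (-s)) (gen_a \<circ> binv)"
  proof (rule comm_split[where m=0])
    show "inj (cj (tau (-s)) (gen_a \<circ> binv))" using cjC gC aC bijC by blast
    show "inj gen_b" using bij_b bij_is_inj by blast
    show "cj (tau (- s)) (gen_a \<circ> binv) t = t" if "0 \<le> t" for t
      using that s by (simp add: cj_def inv_tau' tau_app binv_tr gen_a_def)
    show "gen_b t = t" if "t \<le> 0" for t using that b_id by simp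
  qed
  have xb: "fc (gen_a \<circ> binv) gen_b \<in> N"
    using fN_mult_left[OF N cjC wvC gC(2) fN_commute[OF N cjC gC(2) x_comm] h2] decomp gC aC by simp
  have abinvb: "gen_a \<circ> binv \<circ> gen_b = gen_a" by (auto simp: binv_b)
  have ab: "fc gen_a gen_b \<in> N"
    using fN_mult_left[OF N aC(1) gC(2) gC(2) xb fN_commute[OF N gC(2) gC(2) refl]] abinvb by simp
  have c'_comm: "cj (tau s) gen_c \<circ> (binv \<circ> gen_a) = (binv \<circ> gen_a) \<circ> cj (tau s) gen_c"
  proof (rule comm_split[where m=1, symmetric])
    show "inj (cj (tau s) gen_c)" using cjC gC bijC by blast
    show "inj (binv \<circ> gen_a)" using aC bijC by blast
    show "cj (tau s) gen_c t = t" if "t \<le> 1" for t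
      using that s by (simp add: cj_def inv_tau' tau_app c_id)
    show "(binv \<circ> gen_a) t = t" if "1 \<le> t" for t using that binv_tr by (simp add: gen_a_def)
  qed
  have cf: "fc gen_c (binv \<circ> gen_a) \<in> N"
    using fN_mult_left[OF N cjC wvC aC(2) fN_commute[OF N cjC aC(2) c'_comm] h3] decomp gC aC by simp
  have bc: "fc gen_b gen_c \<in> N" using fN_sym[OF N gC(3) gC(2) cb] .
  have fc': "fc (binv \<circ> gen_a) gen_c \<in> N" using fN_sym[OF N gC(3) aC(2) cf] .
  have bba: "gen_b \<circ> (binv \<circ> gen_a) = gen_a" by (auto simp: b_binv)
  have ac: "fc gen_a gen_c \<in> N"
    using fN_mult_left[OF N gC(2) aC(2) gC(3) bc fc'] bba by simp
  have ba: "fc gen_b gen_a \<in> N" using fN_sym[OF N gC(1) gC(2) ab] .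
  have ca: "fc gen_c gen_a \<in> N" using fN_sym[OF N gC(1) gC(3) ac] .
  have diag: "fc x x \<in> N" if "x \<in> C0" for x using fN_commute[OF N that that refl] .
  show ?thesis
    by (rule fN_derived[OF N]) (use ab ac bc ba ca cb diag gC in auto)
qed


abbreviation D0 where "D0 \<equiv> derived G0 C0"

lemma D0_normal: "D0 \<lhd> G0" using group.derived_self_is_normal[OF grp] .
lemma D0_sub: "D0 \<subseteq> C0" using group.derived_in_carrier[OF grp] by simp
lemma N2_normal: "derived G0 D0 \<lhd> G0" using group.derived_is_normal[OF grp D0_normal] .

lemma fc_D0: "x \<in> C0 \<Longrightarrow> y \<in> C0 \<Longrightarrow> fc x y \<in> D0"
  unfolding derived_def cmG0[symmetric] by (rule generate.incl) blast

lemma fc_D2: "x \<in> D0 \<Longrightarrow> y \<in> D0 \<Longrightarrow> fc x y \<in> derived G0 D0"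
proof -
  assume x: "x \<in> D0" and y: "y \<in> D0"
  have xc: "x \<in> C0" and yc: "y \<in> C0" using x y D0_sub by auto
  show ?thesis unfolding derived_def[of G0 D0] cmG0[OF xc yc, symmetric] by (rule generate.incl, rule UN_I[OF x], rule UN_I[OF y], rule singletonI)
qed

lemma fT:
  assumes h: "h \<in> D0" and g: "g \<in> C0" and k: "k \<in> C0"
    and cm: "(k \<circ> inv_into UNIV g \<circ> inv_into UNIV k) \<circ> h = h \<circ> (k \<circ> inv_into UNIV g \<circ> inv_into UNIV k)"
  shows "fc g h \<in> derived G0 D0"
proof -
  define m where "m = k \<circ> inv_into UNIV g \<circ> inv_into UNIV k"
  have mc: "m \<in> C0" unfolding m_def using g k compC invC by auto
  have hc: "h \<in> C0" using h D0_sub by auto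
  have bm: "bij m" "bij g" "bij h" using mc g hc G0_bij by auto
  have e1: "fc g k = g \<circ> m" by (simp add: fc_def m_def o_assoc)
  have cm': "m \<circ> h = h \<circ> m" using cm unfolding m_def .
  have cmp: "m (h y) = h (m y)" for y using fun_cong[OF cm', of y] by simp
  have mi: "m (inv_into UNIV m z) = z" for z using bm(1) by (simp add: bij_is_surj surj_f_inv_f)
  have inv_gm: "inv_into UNIV (g \<circ> m) = inv_into UNIV m \<circ> inv_into UNIV g"
    using bm by (simp add: o_inv_distrib)
  have e2: "fc (g \<circ> m) h = fc g h"
    by (rule ext) (simp add: fc_def inv_gm cmp mi)
  have "fc (fc g k) h \<in> derived G0 D0" using fc_D2[OF fc_D0[OF g k] h] .
  then show ?thesis using e1 e2 by simp
qed

lemma bC: "gen_b \<in> C0" using gens_G0 by simp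

lemma perfect: "D0 \<subseteq> derived G0 D0"
proof (rule gens_comm_mod[OF N2_normal, of 2])
  note gC = gens_G0 invgens_G0 tau_G0
  have aC: "gen_a \<circ> binv \<in> C0" "binv \<circ> gen_a \<in> C0" using gC compC by auto
  show "(2::int) \<le> 2" by simp
  have w1D: "wv (tau (-2)) gen_c \<in> D0" using wv_eq fc_D0 gC invC by simp
  have "fc gen_b (wv (tau (-2)) gen_c) \<in> derived G0 D0"
  proof (rule fT[OF w1D bC tau_G0[of 2]])
    show "(tau 2 \<circ> inv_into UNIV gen_b \<circ> inv_into UNIV (tau 2)) \<circ> wv (tau (-2)) gen_c =
      wv (tau (-2)) gen_c \<circ> (tau 2 \<circ> inv_into UNIV gen_b \<circ> inv_into UNIV (tau 2))"
    proof (rule comm_split[where m=2, symmetric])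
      show "inj (wv (tau (- 2)) gen_c)" by (intro bijC wvC tau_G0 gens_G0)
      show "inj (tau 2 \<circ> inv_into UNIV gen_b \<circ> inv_into UNIV (tau 2))" by (intro bijC compC invC tau_G0 bC)
      show "(tau 2 \<circ> inv_into UNIV gen_b \<circ> inv_into UNIV (tau 2)) t = t" if "t \<le> 2" for t
        using that by (simp add: inv_b inv_tau' tau_app binv_id)
      show "wv (tau (- 2)) gen_c t = t" if "2 \<le> t" for t
      proof -
        have u: "cj (tau (-2)) gen_c t' = t'" if "0 \<le> t'" for t'
          using that by (simp add: cj_def inv_tau' tau_app c_id)
        have "inv_into UNIV (cj (tau (-2)) gen_c) t = t"
          by (rule inv_id_ge[where m=0]) (use u cjC gC G0_bij \<open>2 \<le> t\<close> in auto)
        then show ?thesis using \<open>2 \<le> t\<close> by (simp add: wv_def c_id)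
      qed
    qed
  qed
  then show "fc (wv (tau (-2)) gen_c) gen_b \<in> derived G0 D0"
    by (rule fN_sym[OF N2_normal bC wvC[OF tau_G0 gens_G0(3)]])
  have w2D: "wv (tau (-2)) (gen_a \<circ> binv) \<in> D0" using wv_eq fc_D0 gC invC aC by simp
  have "fc gen_b (wv (tau (-2)) (gen_a \<circ> binv)) \<in> derived G0 D0"
  proof (rule fT[OF w2D bC tau_G0[of 2]])
    show "(tau 2 \<circ> inv_into UNIV gen_b \<circ> inv_into UNIV (tau 2)) \<circ> wv (tau (-2)) (gen_a \<circ> binv) =
      wv (tau (-2)) (gen_a \<circ> binv) \<circ> (tau 2 \<circ> inv_into UNIV gen_b \<circ> inv_into UNIV (tau 2))"
    proof (rule comm_split[where m=2, symmetric])
      show "inj (wv (tau (- 2)) (gen_a \<circ> binv))" by (intro bijC wvC tau_G0 aC)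
      show "inj (tau 2 \<circ> inv_into UNIV gen_b \<circ> inv_into UNIV (tau 2))" by (intro bijC compC invC tau_G0 bC)
      show "(tau 2 \<circ> inv_into UNIV gen_b \<circ> inv_into UNIV (tau 2)) t = t" if "t \<le> 2" for t
        using that by (simp add: inv_b inv_tau' tau_app binv_id)
      show "wv (tau (- 2)) (gen_a \<circ> binv) t = t" if "2 \<le> t" for t
      proof -
        have u: "cj (tau (-2)) (gen_a \<circ> binv) t' = t'" if "0 \<le> t'" for t'
          using that by (simp add: cj_def inv_tau' tau_app binv_tr gen_a_def)
        have "inv_into UNIV (cj (tau (-2)) (gen_a \<circ> binv)) t = t"
          by (rule inv_id_ge[where m=0]) (use u cjC gC aC G0_bij \<open>2 \<le> t\<close> in auto)
        then show ?thesis using \<open>2 \<le> t\<close> by (simp add: wv_def binv_tr gen_a_def)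
      qed
    qed
  qed
  then show "fc (wv (tau (-2)) (gen_a \<circ> binv)) gen_b \<in> derived G0 D0"
    by (rule fN_sym[OF N2_normal bC wvC[OF tau_G0 aC(1)]])
  have w3D: "wv (tau 2) gen_c \<in> D0" using wv_eq fc_D0 gC invC by simp
  have invf: "inv_into UNIV (binv \<circ> gen_a) t = t" if "1 \<le> t" for t
    by (rule inv_id_ge[where m=1]) (use aC G0_bij that binv_tr in \<open>auto simp: gen_a_def\<close>)
  have "fc (binv \<circ> gen_a) (wv (tau 2) gen_c) \<in> derived G0 D0"
  proof (rule fT[OF w3D aC(2) tau_G0[of "-3"]])
    show "(tau (-3) \<circ> inv_into UNIV (binv \<circ> gen_a) \<circ> inv_into UNIV (tau (-3))) \<circ> wv (tau 2) gen_c =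
      wv (tau 2) gen_c \<circ> (tau (-3) \<circ> inv_into UNIV (binv \<circ> gen_a) \<circ> inv_into UNIV (tau (-3)))"
    proof (rule comm_split[where m="-2"])
      show "inj (wv (tau 2) gen_c)" by (intro bijC wvC tau_G0 gens_G0)
      show "inj (tau (-3) \<circ> inv_into UNIV (binv \<circ> gen_a) \<circ> inv_into UNIV (tau (-3)))"
        by (intro bijC compC invC tau_G0 aC)
      show "(tau (-3) \<circ> inv_into UNIV (binv \<circ> gen_a) \<circ> inv_into UNIV (tau (-3))) t = t" if "-2 \<le> t" for t
        using that invf[of "t+3"] by (simp add: inv_tau' tau_app)
      show "wv (tau 2) gen_c t = t" if "t \<le> -2" for t
      proof -
        have u: "cj (tau 2) gen_c t' = t'" if "t' \<le> 2" for t'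
          using that by (simp add: cj_def inv_tau' tau_app c_id)
        have "inv_into UNIV (cj (tau 2) gen_c) t = t"
          by (rule inv_id_le[where m=2]) (use u cjC gC G0_bij \<open>t \<le> -2\<close> in auto)
        then show ?thesis using \<open>t \<le> -2\<close> by (simp add: wv_def c_id)
      qed
    qed
  qed
  then show "fc (wv (tau 2) gen_c) (binv \<circ> gen_a) \<in> derived G0 D0"
    by (rule fN_sym[OF N2_normal aC(2) wvC[OF tau_G0 gens_G0(3)]])
qed


definition core :: "(real \<Rightarrow> real) set \<Rightarrow> (real \<Rightarrow> real) set" where
  "core K = {g \<in> C0. \<forall>x\<in>C0. x \<otimes>\<^bsub>G0\<^esub> g \<otimes>\<^bsub>G0\<^esub> inv\<^bsub>G0\<^esub> x \<in> K}"

lemma core_normal: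
  assumes K: "subgroup K G0"
  shows "core K \<lhd> G0"
proof -
  interpret G: group G0 by (rule grp)
  interpret K: subgroup K G0 by (rule K)
  have sub: "subgroup (core K) G0"
  proof (rule G.subgroupI)
    show "core K \<subseteq> C0" by (auto simp: core_def)
    show "core K \<noteq> {}"
    proof -
      have "\<one>\<^bsub>G0\<^esub> \<in> core K" by (auto simp: core_def)
      then show ?thesis by blast
    qed
    show "inv\<^bsub>G0\<^esub> a \<in> core K" if "a \<in> core K" for a
    proof -
      have ac: "a \<in> C0" using that by (simp add: core_def)
      have "x \<otimes>\<^bsub>G0\<^esub> inv\<^bsub>G0\<^esub> a \<otimes>\<^bsub>G0\<^esub> inv\<^bsub>G0\<^esub> x \<in> K" if x: "x \<in> C0" for x
      proof -
        have "x \<otimes>\<^bsub>G0\<^esub> a \<otimes>\<^bsub>G0\<^esub> inv\<^bsub>G0\<^esub> x \<in> K" using \<open>a \<in> core K\<close> x by (simp add: core_def)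
        then have "inv\<^bsub>G0\<^esub> (x \<otimes>\<^bsub>G0\<^esub> a \<otimes>\<^bsub>G0\<^esub> inv\<^bsub>G0\<^esub> x) \<in> K" by (rule K.m_inv_closed)
        then show ?thesis using x ac by (simp add: G.inv_mult_group G.m_assoc)
      qed
      then show ?thesis using ac by (simp add: core_def)
    qed
    show "a \<otimes>\<^bsub>G0\<^esub> b \<in> core K" if "a \<in> core K" "b \<in> core K" for a b
    proof -
      have ac: "a \<in> C0" "b \<in> C0" using that by (auto simp: core_def)
      have "x \<otimes>\<^bsub>G0\<^esub> (a \<otimes>\<^bsub>G0\<^esub> b) \<otimes>\<^bsub>G0\<^esub> inv\<^bsub>G0\<^esub> x \<in> K" if x: "x \<in> C0" for x
      proof -
        have "x \<otimes>\<^bsub>G0\<^esub> a \<otimes>\<^bsub>G0\<^esub> inv\<^bsub>G0\<^esub> x \<in> K" "x \<otimes>\<^bsub>G0\<^esub> b \<otimes>\<^bsub>G0\<^esub> inv\<^bsub>G0\<^esub> x \<in> K"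
          using that \<open>a \<in> core K\<close> \<open>b \<in> core K\<close> by (auto simp: core_def)
        then have "(x \<otimes>\<^bsub>G0\<^esub> a \<otimes>\<^bsub>G0\<^esub> inv\<^bsub>G0\<^esub> x) \<otimes>\<^bsub>G0\<^esub> (x \<otimes>\<^bsub>G0\<^esub> b \<otimes>\<^bsub>G0\<^esub> inv\<^bsub>G0\<^esub> x) \<in> K"
          by (rule K.m_closed)
        then show ?thesis using x ac by (simp add: G.m_assoc G.canc1)
      qed
      then show ?thesis using ac by (simp add: core_def)
    qed
  qed
  have "x \<otimes>\<^bsub>G0\<^esub> h \<otimes>\<^bsub>G0\<^esub> inv\<^bsub>G0\<^esub> x \<in> core K" if "x \<in> C0" "h \<in> core K" for x h
  proof -
    have hc: "h \<in> C0" using that by (simp add: core_def)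
    have "y \<otimes>\<^bsub>G0\<^esub> (x \<otimes>\<^bsub>G0\<^esub> h \<otimes>\<^bsub>G0\<^esub> inv\<^bsub>G0\<^esub> x) \<otimes>\<^bsub>G0\<^esub> inv\<^bsub>G0\<^esub> y \<in> K" if y: "y \<in> C0" for y
    proof -
      have "(y \<otimes>\<^bsub>G0\<^esub> x) \<otimes>\<^bsub>G0\<^esub> h \<otimes>\<^bsub>G0\<^esub> inv\<^bsub>G0\<^esub> (y \<otimes>\<^bsub>G0\<^esub> x) \<in> K"
        using \<open>h \<in> core K\<close> y \<open>x \<in> C0\<close> by (simp add: core_def)
      then show ?thesis using y \<open>x \<in> C0\<close> hc by (simp add: G.m_assoc G.inv_mult_group)
    qed
    then show ?thesis using hc \<open>x \<in> C0\<close> by (simp add: core_def)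
  qed
  then show ?thesis using sub G.normal_inv_iff by blast
qed

lemma core_sub: "subgroup K G0 \<Longrightarrow> core K \<subseteq> K"
proof
  fix g assume K: "subgroup K G0" and g: "g \<in> core K"
  interpret G: group G0 by (rule grp)
  have gc: "g \<in> C0" and all: "\<forall>x\<in>C0. x \<otimes>\<^bsub>G0\<^esub> g \<otimes>\<^bsub>G0\<^esub> inv\<^bsub>G0\<^esub> x \<in> K"
    using g by (auto simp: core_def)
  have "\<one>\<^bsub>G0\<^esub> \<otimes>\<^bsub>G0\<^esub> g \<otimes>\<^bsub>G0\<^esub> inv\<^bsub>G0\<^esub> \<one>\<^bsub>G0\<^esub> \<in> K" using all G.one_closed by blast
  then show "g \<in> K" using gc by simp
qed

lemma tau_mult: "tau i \<otimes>\<^bsub>G0\<^esub> tau j = tau (i + j)"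
  by (simp add: mult_G0 tau_G0) (auto simp: tau_def)

lemma tau0: "tau 0 = \<one>\<^bsub>G0\<^esub>" by (simp add: one_G0 tau_def id_def)

lemma tau_in_core:
  assumes K: "fin_index_subgroup G0 K"
  shows "\<exists>n::int. n \<ge> 1 \<and> tau n \<in> core K"
proof -
  interpret G: group G0 by (rule grp)
  have Ks: "subgroup K G0" and fin: "finite (rcosets\<^bsub>G0\<^esub> K)" using K by (auto simp: fin_index_subgroup_def)
  interpret K: subgroup K G0 by (rule Ks)
  have KC: "K \<subseteq> C0" by (rule K.subset)
  define R where "R = rcosets\<^bsub>G0\<^esub> K"
  define \<Phi> where "\<Phi> = (\<lambda>i::nat. restrict (\<lambda>Z. r_coset G0 Z (tau (int i))) R)"
  have "\<Phi> i \<in> R \<rightarrow>\<^sub>E R" for i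
  proof
    fix Z assume "Z \<in> R"
    then obtain x where x: "x \<in> C0" "Z = K #>\<^bsub>G0\<^esub> x" by (auto simp: R_def RCOSETS_def)
    then have "Z #>\<^bsub>G0\<^esub> tau (int i) = K #>\<^bsub>G0\<^esub> (x \<otimes>\<^bsub>G0\<^esub> tau (int i))"
      by (simp add: G.coset_mult_assoc KC tau_G0)
    then show "\<Phi> i Z \<in> R" using \<open>Z \<in> R\<close> x tau_G0 by (auto simp: \<Phi>_def R_def RCOSETS_def)
  qed (simp add: \<Phi>_def)
  then have "range \<Phi> \<subseteq> R \<rightarrow>\<^sub>E R" by blast
  moreover have "finite (R \<rightarrow>\<^sub>E R)" using fin by (simp add: R_def finite_PiE)
  ultimately have "finite (range \<Phi>)" by (rule finite_subset)
  then have "\<not> inj \<Phi>" using finite_imageD infinite_UNIV_nat by blast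
  then obtain i j where ij: "i \<noteq> j" "\<Phi> i = \<Phi> j" by (auto simp: inj_def)
  then obtain i j where ij: "i < j" "\<Phi> i = \<Phi> j"
    by (metis linorder_neqE_nat)
  define n where "n = int j - int i"
  have n1: "n \<ge> 1" using ij by (simp add: n_def)
  have "tau n \<in> core K"
    unfolding core_def
  proof (intro CollectI conjI ballI)
    show "tau n \<in> C0" by (rule tau_G0)
    fix y assume y: "y \<in> C0"
    define x where "x = y \<otimes>\<^bsub>G0\<^esub> tau (- int i)"
    have xc: "x \<in> C0" using y tau_G0 by (simp add: x_def)
    have xR: "K #>\<^bsub>G0\<^esub> x \<in> R" using xc by (auto simp: R_def RCOSETS_def)
    have "(K #>\<^bsub>G0\<^esub> x) #>\<^bsub>G0\<^esub> tau (int i) = (K #>\<^bsub>G0\<^esub> x) #>\<^bsub>G0\<^esub> tau (int j)"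
      using fun_cong[OF ij(2), of "K #>\<^bsub>G0\<^esub> x"] xR by (simp add: \<Phi>_def)
    then have e: "K #>\<^bsub>G0\<^esub> (x \<otimes>\<^bsub>G0\<^esub> tau (int i)) = K #>\<^bsub>G0\<^esub> (x \<otimes>\<^bsub>G0\<^esub> tau (int j))"
      by (simp add: G.coset_mult_assoc KC tau_G0 xc)
    have yx: "x \<otimes>\<^bsub>G0\<^esub> tau (int i) = y" using y tau_G0
      by (simp add: x_def G.m_assoc tau_mult tau0)
    have yx2: "x \<otimes>\<^bsub>G0\<^esub> tau (int j) = y \<otimes>\<^bsub>G0\<^esub> tau n" using y tau_G0
      by (simp add: x_def G.m_assoc tau_mult n_def)
    have "K #>\<^bsub>G0\<^esub> y = K #>\<^bsub>G0\<^esub> (y \<otimes>\<^bsub>G0\<^esub> tau n)" using e yx yx2 by simp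
    then have "y \<otimes>\<^bsub>G0\<^esub> tau n \<in> K #>\<^bsub>G0\<^esub> y"
      using G.repr_independenceD[OF Ks] y tau_G0 by simp
    then show "y \<otimes>\<^bsub>G0\<^esub> tau n \<otimes>\<^bsub>G0\<^esub> inv\<^bsub>G0\<^esub> y \<in> K"
      using K.rcos_module_imp[OF grp y] by simp
  qed
  then show ?thesis using n1 by blast
qed

lemma D0_in_fin_index:
  assumes K: "fin_index_subgroup G0 K"
  shows "D0 \<subseteq> K"
proof -
  have Ks: "subgroup K G0" using K by (simp add: fin_index_subgroup_def)
  obtain n where n: "n \<ge> 1" "tau n \<in> core K" using tau_in_core[OF K] by blast
  note N = core_normal[OF Ks]
  interpret N: normal "core K" G0 by (rule N)
  have NS: "subgroup (core K) G0" using N by (rule normal_imp_subgroup)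
  define s where "s = 2 * n"
  have ts: "tau s \<in> core K" unfolding s_def mult_2 tau_mult[of n n, symmetric] by (rule subgroup.m_closed[OF NS n(2) n(2)])
  have tms: "tau (-s) \<in> core K" using subgroup.m_inv_closed[OF NS ts] unfolding inv_G0[OF tau_G0] inv_tau .
  note gC = gens_G0 invgens_G0 tau_G0
  have aC: "gen_a \<circ> binv \<in> C0" "binv \<circ> gen_a \<in> C0"
    using compC[OF gens_G0(1) invgens_G0(2)] compC[OF invgens_G0(2) gens_G0(1)] by auto
  have wN: "wv k x \<in> core K" if "k \<in> core K" "x \<in> C0" for k x
  proof -
    have kc: "k \<in> C0" using that(1) unfolding core_def by blast
    show ?thesis unfolding wv_eq[OF kc that(2)] by (rule fN_of_N[OF N kc invC[OF that(2)] that(1)])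
  qed
  have "D0 \<subseteq> core K"
  proof (rule gens_comm_mod[OF N, of s])
    show "2 \<le> s" using n by (simp add: s_def)
    show "fc (wv (tau (- s)) gen_c) gen_b \<in> core K"
      by (rule fN_of_N[OF N wvC[OF tau_G0 gens_G0(3)] bC wN[OF tms gens_G0(3)]])
    show "fc (wv (tau (- s)) (gen_a \<circ> binv)) gen_b \<in> core K"
      by (rule fN_of_N[OF N wvC[OF tau_G0 aC(1)] bC wN[OF tms aC(1)]])
    show "fc (wv (tau s) gen_c) (binv \<circ> gen_a) \<in> core K"
      by (rule fN_of_N[OF N wvC[OF tau_G0 gens_G0(3)] aC(2) wN[OF ts gens_G0(3)]])
  qed
  then show ?thesis using core_sub[OF Ks] by blast
qed

lemma part2:
  assumes K: "fin_index_subgroup G0 K"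
  shows "K \<lhd> G0 \<and> derived G0 K = derived G0 C0"
proof -
  interpret G: group G0 by (rule grp)
  have Ks: "subgroup K G0" using K by (simp add: fin_index_subgroup_def)
  interpret K: subgroup K G0 by (rule Ks)
  have DK: "D0 \<subseteq> K" by (rule D0_in_fin_index[OF K])
  have "x \<otimes>\<^bsub>G0\<^esub> h \<otimes>\<^bsub>G0\<^esub> inv\<^bsub>G0\<^esub> x \<in> K" if "x \<in> C0" "h \<in> K" for x h
  proof -
    have hc: "h \<in> C0" using that K.subset by blast
    have "fc x h \<in> K" using fc_D0[OF that(1) hc] DK by blast
    then have "(x \<otimes>\<^bsub>G0\<^esub> h \<otimes>\<^bsub>G0\<^esub> inv\<^bsub>G0\<^esub> x \<otimes>\<^bsub>G0\<^esub> inv\<^bsub>G0\<^esub> h) \<otimes>\<^bsub>G0\<^esub> h \<in> K"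
      using cmG0[OF that(1) hc] K.m_closed that(2) by simp
    then show ?thesis using that(1) hc by (simp add: G.m_assoc)
  qed
  then have nK: "K \<lhd> G0" using G.normal_inv_iff Ks by blast
  have "derived G0 K \<subseteq> D0" by (rule G.mono_derived[OF K.subset])
  moreover have "D0 \<subseteq> derived G0 K" using perfect G.mono_derived[OF DK] by blast
  ultimately show ?thesis using nK by blast
qed


lemma rderiv:
  assumes "(f has_real_derivative D) (at x)" "d > 0" "\<And>t. x \<le> t \<Longrightarrow> t < x + d \<Longrightarrow> g t = f t"
  shows "(g has_real_derivative D) (at x within {x..})"
proof (rule has_field_derivative_transform_within[OF has_field_derivative_at_within[OF assms(1)] assms(2)])
  show "x \<in> {x..}" by simp
  fix t assume "t \<in> {x..}" "dist t x < d"
  then show "f t = g t" using assms(3)[of t] by (auto simp: dist_real_def)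
qed

lemma lderiv:
  assumes "(f has_real_derivative D) (at x)" "d > 0" "\<And>t. x - d < t \<Longrightarrow> t \<le> x \<Longrightarrow> g t = f t"
  shows "(g has_real_derivative D) (at x within {..x})"
proof (rule has_field_derivative_transform_within[OF has_field_derivative_at_within[OF assms(1)] assms(2)])
  show "x \<in> {..x}" by simp
  fix t assume "t \<in> {..x}" "dist t x < d"
  then show "f t = g t" using assms(3)[of t] by (auto simp: dist_real_def)
qed

lemma dq1: "x \<noteq> 1 \<Longrightarrow> ((\<lambda>t. t / (1 - t)) has_real_derivative 1 / (1 - x)^2) (at x)"
  by (auto intro!: derivative_eq_intros simp: field_simps power2_eq_square)
lemma dq2: "x \<noteq> 0 \<Longrightarrow> ((\<lambda>t. (3*t - 1) / t) has_real_derivative 1 / x^2) (at x)"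
  by (auto intro!: derivative_eq_intros simp: field_simps power2_eq_square)
lemma dq3: "((\<lambda>t. t + c) has_real_derivative 1) (at x)"
  by (auto intro!: derivative_eq_intros)
lemma dq4: "x \<noteq> -1 \<Longrightarrow> ((\<lambda>t. 2*t / (t + 1)) has_real_derivative 2 / (x + 1)^2) (at x)"
  by (auto intro!: derivative_eq_intros simp: field_simps power2_eq_square)
lemma dq5: "x \<noteq> -1 \<Longrightarrow> ((\<lambda>t. t / (1 + t)) has_real_derivative 1 / (1 + x)^2) (at x)"
  by (auto intro!: derivative_eq_intros simp: field_simps power2_eq_square)
lemma dq6: "x \<noteq> 3 \<Longrightarrow> ((\<lambda>t. 1 / (3 - t)) has_real_derivative 1 / (3 - x)^2) (at x)"
  by (auto intro!: derivative_eq_intros simp: field_simps power2_eq_square)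
lemma dq7: "x \<noteq> 2 \<Longrightarrow> ((\<lambda>t. t / (2 - t)) has_real_derivative 2 / (2 - x)^2) (at x)"
  by (auto intro!: derivative_eq_intros simp: field_simps power2_eq_square)
lemma dqid: "((\<lambda>t. t) has_real_derivative 1) (at x)"
  by (auto intro!: derivative_eq_intros)

lemma thr: "(\<And>t. t \<le> p \<Longrightarrow> g t \<le> v) \<Longrightarrow> (\<And>s. s > p \<Longrightarrow> g s \<ge> v) \<Longrightarrow> t \<le> p \<Longrightarrow> p < s \<Longrightarrow> g t \<le> (g s :: real)"
  by (meson order_trans)

lemma mono_b: "mono gen_b"
proof (rule monoI)
  fix t s :: real assume ts: "t \<le> s"
  have A: "gen_b t \<le> 0" if "t \<le> 0" for t using that by (simp add: gen_b_def)
  have A': "gen_b s \<ge> 0" if "s > 0" for s using that by (auto simp: gen_b_def)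
  have B: "gen_b t \<le> 1" if "t \<le> 1/2" for t using that by (auto simp: gen_b_def field_simps)
  have B': "gen_b s \<ge> 1" if "s > 1/2" for s using that by (auto simp: gen_b_def field_simps)
  have C: "gen_b t \<le> 2" if "t \<le> 1" for t using that by (auto simp: gen_b_def field_simps)
  have C': "gen_b s \<ge> 2" if "s > 1" for s using that by (auto simp: gen_b_def field_simps)
  consider "s \<le> 0" | "t \<le> 0" "0 < s" | "0 < t" "s \<le> 1/2" | "0 < t" "t \<le> 1/2" "1/2 < s"
    | "1/2 < t" "s \<le> 1" | "1/2 < t" "t \<le> 1" "1 < s" | "1 < t" using ts by linarith
  then show "gen_b t \<le> gen_b s"
  proof cases
    case 1 then show ?thesis using ts by (simp add: gen_b_def)
  next
    case 2 then show ?thesis using thr[of 0 gen_b 0, OF A A'] by blast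
  next
    case 3
    have "t / (1 - t) \<le> s / (1 - s)" using 3 ts by (simp add: frac_le divide_simps) (simp add: algebra_simps)
    then show ?thesis using 3 ts by (simp add: gen_b_def)
  next
    case 4 then show ?thesis using thr[of "1/2" gen_b 1, OF B B'] by blast
  next
    case 5
    have "(3*t - 1) / t \<le> (3*s - 1) / s" using 5 ts by (simp add: divide_simps) (simp add: algebra_simps)
    then show ?thesis using 5 ts by (simp add: gen_b_def)
  next
    case 6 then show ?thesis using thr[of 1 gen_b 2, OF C C'] by blast
  next
    case 7 then show ?thesis using ts by (simp add: gen_b_def)
  qed
qed


lemma mono_inv: fixes g :: "real \<Rightarrow> real" assumes "bij g" "mono g" shows "mono (inv_into UNIV g)"
proof (rule monoI)
  fix s s' :: real assume ss: "s \<le> s'"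
  show "inv_into UNIV g s \<le> inv_into UNIV g s'"
  proof (rule ccontr)
    assume nt: "\<not> inv_into UNIV g s \<le> inv_into UNIV g s'"
    then have "inv_into UNIV g s' \<le> inv_into UNIV g s" by simp
    then have "g (inv_into UNIV g s') \<le> g (inv_into UNIV g s)" using assms(2) by (simp add: monoD)
    then have "s' \<le> s" using assms(1) by (simp add: bij_is_surj surj_f_inv_f)
    then have "s = s'" using ss by simp
    then show False using nt by simp
  qed
qed

lemma mono_c: "mono gen_c"
proof (rule monoI)
  fix t s :: real assume ts: "t \<le> s"
  have A: "gen_c t \<le> 0" if "t \<le> 0" for t using that by (simp add: gen_c_def)
  have A': "gen_c s \<ge> 0" if "s > 0" for s using that by (auto simp: gen_c_def)
  have C: "gen_c t \<le> 1" if "t \<le> 1" for t using that by (auto simp: gen_c_def field_simps)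
  have C': "gen_c s \<ge> 1" if "s > 1" for s using that by (auto simp: gen_c_def field_simps)
  consider "s \<le> 0" | "t \<le> 0" "0 < s" | "0 < t" "s \<le> 1" | "0 < t" "t \<le> 1" "1 < s"
    | "1 < t" using ts by linarith
  then show "gen_c t \<le> gen_c s"
  proof cases
    case 1 then have "t \<le> 0" "s \<le> 0" using ts by auto
    then have "gen_c t = t" "gen_c s = s" by (auto simp: gen_c_def)
    then show ?thesis using ts by simp
  next
    case 2 then show ?thesis using thr[of 0 gen_c 0, OF A A'] by blast
  next
    case 3
    have "2*t / (t+1) \<le> 2*s / (s+1)" using 3 ts by (simp add: divide_simps) (simp add: algebra_simps)
    then show ?thesis using 3 ts by (simp add: gen_c_def)
  next
    case 4 then show ?thesis using thr[of 1 gen_c 1, OF C C'] by blast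
  next
    case 5 then show ?thesis using ts by (simp add: gen_c_def)
  qed
qed

definition dR :: "(real \<Rightarrow> real) \<Rightarrow> real \<Rightarrow> real" where
  "dR g x = (THE D. (g has_real_derivative D) (at x within {x..}))"
definition dL :: "(real \<Rightarrow> real) \<Rightarrow> real \<Rightarrow> real" where
  "dL g x = (THE D. (g has_real_derivative D) (at x within {..x}))"

lemma dR_eq: assumes "(g has_real_derivative D) (at x within {x..})" shows "dR g x = D"
  unfolding dR_def
proof (rule the_equality)
  show "(g has_real_derivative D) (at x within {x..})" by (rule assms)
  fix D' assume "(g has_real_derivative D') (at x within {x..})"
  then show "D' = D" using assms unfolding has_field_derivative_iff at_within_Ici_at_right
    using tendsto_unique trivial_limit_at_right_real by blast
qed

lemma dL_eq: assumes "(g has_real_derivative D) (at x within {..x})" shows "dL g x = D"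
  unfolding dL_def
proof (rule the_equality)
  show "(g has_real_derivative D) (at x within {..x})" by (rule assms)
  fix D' assume "(g has_real_derivative D') (at x within {..x})"
  then show "D' = D" using assms unfolding has_field_derivative_iff at_within_Iic_at_left
    using tendsto_unique trivial_limit_at_left_real by blast
qed

definition PP :: "(real \<Rightarrow> real) \<Rightarrow> bool" where
  "PP g \<longleftrightarrow> bij g \<and> mono g \<and>
     (\<forall>x. \<exists>D>0. (g has_real_derivative D) (at x within {x..})) \<and>
     (\<forall>x. \<exists>D>0. (g has_real_derivative D) (at x within {..x})) \<and>
     finite {x. dR g x \<noteq> dL g x} \<and>
     (\<exists>m::int. \<exists>M. \<forall>t\<le>M. g t = t + of_int m) \<and>
     (\<exists>m::int. \<exists>M. \<forall>t\<ge>M. g t = t + of_int m)"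

lemma PP_intro:
  assumes "bij g" "mono g" "finite F"
    and d: "\<And>x. \<exists>D1 D2. D1 > 0 \<and> D2 > 0 \<and> (g has_real_derivative D1) (at x within {x..}) \<and>
        (g has_real_derivative D2) (at x within {..x}) \<and> (x \<notin> F \<longrightarrow> D1 = D2)"
    and "\<exists>m::int. \<exists>M. \<forall>t\<le>M. g t = t + of_int m" "\<exists>m::int. \<exists>M. \<forall>t\<ge>M. g t = t + of_int m"
  shows "PP g"
proof -
  have "{x. dR g x \<noteq> dL g x} \<subseteq> F"
  proof
    fix x assume "x \<in> {x. dR g x \<noteq> dL g x}"
    moreover obtain D1 D2 where "D1 > 0 \<and> D2 > 0 \<and> (g has_real_derivative D1) (at x within {x..}) \<and>
        (g has_real_derivative D2) (at x within {..x}) \<and> (x \<notin> F \<longrightarrow> D1 = D2)" using d by blast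
    ultimately show "x \<in> F" using dR_eq dL_eq by auto
  qed
  then have "finite {x. dR g x \<noteq> dL g x}" using assms(3) finite_subset by blast
  moreover have "\<forall>x. \<exists>D>0. (g has_real_derivative D) (at x within {x..})" using d by blast
  moreover have "\<forall>x. \<exists>D>0. (g has_real_derivative D) (at x within {..x})" using d by blast
  ultimately show ?thesis using assms unfolding PP_def by blast
qed

lemma PP_R: "PP g \<Longrightarrow> (g has_real_derivative dR g x) (at x within {x..}) \<and> dR g x > 0"
  unfolding PP_def using dR_eq by metis
lemma PP_L: "PP g \<Longrightarrow> (g has_real_derivative dL g x) (at x within {..x}) \<and> dL g x > 0"
  unfolding PP_def using dL_eq by metis

lemma img_R: "mono h \<Longrightarrow> h ` {x..} \<subseteq> {h x..}" by (auto dest: monoD)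
lemma img_L: "mono h \<Longrightarrow> h ` {..x} \<subseteq> {..h x}" by (auto dest: monoD)

lemma chainR: assumes "PP g" "PP h"
  shows "((g \<circ> h) has_real_derivative dR g (h x) * dR h x) (at x within {x..})"
proof (rule DERIV_image_chain)
  show "(g has_real_derivative dR g (h x)) (at (h x) within h ` {x..})"
    using DERIV_subset PP_R[OF assms(1)] img_R assms(2) unfolding PP_def by blast
  show "(h has_real_derivative dR h x) (at x within {x..})" using PP_R[OF assms(2)] by blast
qed

lemma chainL: assumes "PP g" "PP h"
  shows "((g \<circ> h) has_real_derivative dL g (h x) * dL h x) (at x within {..x})"
proof (rule DERIV_image_chain)
  show "(g has_real_derivative dL g (h x)) (at (h x) within h ` {..x})"
    using DERIV_subset PP_L[OF assms(1)] img_L assms(2) unfolding PP_def by blast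
  show "(h has_real_derivative dL h x) (at x within {..x})" using PP_L[OF assms(2)] by blast
qed

lemma dR_comp: "PP g \<Longrightarrow> PP h \<Longrightarrow> dR (g \<circ> h) x = dR g (h x) * dR h x"
  using chainR dR_eq by blast
lemma dL_comp: "PP g \<Longrightarrow> PP h \<Longrightarrow> dL (g \<circ> h) x = dL g (h x) * dL h x"
  using chainL dL_eq by blast

lemma PP_bij: "PP g \<Longrightarrow> bij g" by (simp add: PP_def)
lemma PP_mono: "PP g \<Longrightarrow> mono g" by (simp add: PP_def)
lemma PP_fin: "PP g \<Longrightarrow> finite {x. dR g x \<noteq> dL g x}" by (simp add: PP_def)

lemma bp_comp: assumes "PP g" "PP h"
  shows "{x. dR (g \<circ> h) x \<noteq> dL (g \<circ> h) x} \<subseteq> {x. dR h x \<noteq> dL h x} \<union> inv_into UNIV h ` {y. dR g y \<noteq> dL g y}"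
proof
  fix x assume x: "x \<in> {x. dR (g \<circ> h) x \<noteq> dL (g \<circ> h) x}"
  show "x \<in> {x. dR h x \<noteq> dL h x} \<union> inv_into UNIV h ` {y. dR g y \<noteq> dL g y}"
  proof (cases "dR h x = dL h x")
    case True
    then have "dR g (h x) \<noteq> dL g (h x)" using x dR_comp[OF assms] dL_comp[OF assms] by auto
    moreover have "x = inv_into UNIV h (h x)" using PP_bij[OF assms(2)] by (simp add: bij_is_inj)
    ultimately show ?thesis by blast
  qed simp
qed

lemma PP_comp: assumes g: "PP g" and h: "PP h" shows "PP (g \<circ> h)"
proof -
  have b: "bij (g \<circ> h)" using PP_bij[OF g] PP_bij[OF h] by (rule bij_comp[rotated])
  have m: "mono (g \<circ> h)"
  proof (rule monoI)
    fix u v :: real assume "u \<le> v"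
    then show "(g \<circ> h) u \<le> (g \<circ> h) v"
      unfolding o_def by (rule monoD[OF PP_mono[OF g] monoD[OF PP_mono[OF h]]])
  qed
  have f: "finite {x. dR (g \<circ> h) x \<noteq> dL (g \<circ> h) x}"
    by (rule finite_subset[OF bp_comp[OF g h]]) (use PP_fin[OF g] PP_fin[OF h] in blast)
  have r: "\<forall>x. \<exists>D>0. ((g \<circ> h) has_real_derivative D) (at x within {x..})"
    using chainR[OF g h] PP_R[OF g] PP_R[OF h] by (meson mult_pos_pos)
  have l: "\<forall>x. \<exists>D>0. ((g \<circ> h) has_real_derivative D) (at x within {..x})"
    using chainL[OF g h] PP_L[OF g] PP_L[OF h] by (meson mult_pos_pos)
  obtain mg Mg where tg: "\<forall>t\<le>Mg. g t = t + of_int mg" using g unfolding PP_def by blast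
  obtain mh Mh where th: "\<forall>t\<le>Mh. h t = t + of_int mh" using h unfolding PP_def by blast
  have tl: "\<forall>t\<le>min Mh (Mg - of_int mh). (g \<circ> h) t = t + of_int (mh + mg)"
    using tg th by auto
  obtain mg' Mg' where tg': "\<forall>t\<ge>Mg'. g t = t + of_int mg'" using g unfolding PP_def by blast
  obtain mh' Mh' where th': "\<forall>t\<ge>Mh'. h t = t + of_int mh'" using h unfolding PP_def by blast
  have tr: "\<forall>t\<ge>max Mh' (Mg' - of_int mh'). (g \<circ> h) t = t + of_int (mh' + mg')"
    using tg' th' by auto
  show ?thesis unfolding PP_def using b m f r l tl tr by blast
qed


definition Lam :: "(real \<Rightarrow> real) \<Rightarrow> real \<Rightarrow> real" where
  "Lam g x = ln (dR g x) - ln (dL g x)"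
definition Gam :: "(real \<Rightarrow> real) \<Rightarrow> real" where
  "Gam g = (\<Sum>x\<in>{x. dR g x \<noteq> dL g x}. Lam g x)"

lemma Gam_sup: assumes "PP g" "finite F" "{x. dR g x \<noteq> dL g x} \<subseteq> F"
  shows "Gam g = (\<Sum>x\<in>F. Lam g x)"
  unfolding Gam_def by (rule sum.mono_neutral_left[OF assms(2,3)]) (auto simp: Lam_def)

lemma Lam_comp: assumes "PP g" "PP h" shows "Lam (g \<circ> h) x = Lam g (h x) + Lam h x"
proof -
  have p: "dR g (h x) > 0" "dR h x > 0" "dL g (h x) > 0" "dL h x > 0"
    using PP_R[OF assms(1)] PP_R[OF assms(2)] PP_L[OF assms(1)] PP_L[OF assms(2)] by auto
  show ?thesis unfolding Lam_def dR_comp[OF assms] dL_comp[OF assms] using p by (simp add: ln_mult)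
qed

lemma Gam_comp: assumes g: "PP g" and h: "PP h" shows "Gam (g \<circ> h) = Gam g + Gam h"
proof -
  define T where "T = {x. dR h x \<noteq> dL h x} \<union> inv_into UNIV h ` {y. dR g y \<noteq> dL g y}"
  have fT: "finite T" unfolding T_def using PP_fin[OF g] PP_fin[OF h] by blast
  have bh: "bij h" by (rule PP_bij[OF h])
  have "Gam (g \<circ> h) = (\<Sum>x\<in>T. Lam (g \<circ> h) x)"
    by (rule Gam_sup[OF PP_comp[OF g h] fT]) (unfold T_def, rule bp_comp[OF g h])
  also have "\<dots> = (\<Sum>x\<in>T. Lam g (h x)) + (\<Sum>x\<in>T. Lam h x)"
    by (simp add: Lam_comp[OF g h] sum.distrib)
  also have "(\<Sum>x\<in>T. Lam h x) = Gam h"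
    by (rule Gam_sup[OF h fT, symmetric]) (auto simp: T_def)
  also have "(\<Sum>x\<in>T. Lam g (h x)) = (\<Sum>y\<in>h ` T. Lam g y)"
  proof -
    have "inj_on h T" using bh bij_is_inj inj_on_subset by blast
    then show ?thesis using sum.reindex[of h T "Lam g"] by (simp add: o_def)
  qed
  also have "\<dots> = Gam g"
  proof (rule Gam_sup[OF g, symmetric])
    show "finite (h ` T)" using fT by simp
    show "{x. dR g x \<noteq> dL g x} \<subseteq> h ` T"
    proof
      fix y assume "y \<in> {x. dR g x \<noteq> dL g x}"
      then have "inv_into UNIV h y \<in> T" by (simp add: T_def)
      moreover have "h (inv_into UNIV h y) = y" using bh by (simp add: bij_is_surj surj_f_inv_f)
      ultimately show "y \<in> h ` T" by (metis imageI)
    qed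
  qed
  finally show ?thesis by (simp add: o_def)
qed

definition alpha :: "(real \<Rightarrow> real) \<Rightarrow> int" where
  "alpha g = (THE m::int. \<exists>M. \<forall>t\<le>M. g t = t + of_int m)"
definition beta :: "(real \<Rightarrow> real) \<Rightarrow> int" where
  "beta g = (THE m::int. \<exists>M. \<forall>t\<ge>M. g t = t + of_int m)"

lemma alpha_eq: assumes "\<forall>t\<le>M. g t = t + of_int m" shows "alpha g = m"
  unfolding alpha_def
proof (rule the_equality)
  show "\<exists>M. \<forall>t\<le>M. g t = t + of_int m" using assms by blast
  fix m' assume "\<exists>M. \<forall>t\<le>M. g t = t + of_int (m'::int)"
  then obtain M' where "\<forall>t\<le>M'. g t = t + of_int m'" by blast
  then have "min M M' + of_int m' = min M M' + of_int m" using assms by (metis min.cobounded1 min.cobounded2)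
  then show "m' = m" by simp
qed

lemma beta_eq: assumes "\<forall>t\<ge>M. g t = t + of_int m" shows "beta g = m"
  unfolding beta_def
proof (rule the_equality)
  show "\<exists>M. \<forall>t\<ge>M. g t = t + of_int m" using assms by blast
  fix m' assume "\<exists>M. \<forall>t\<ge>M. g t = t + of_int (m'::int)"
  then obtain M' where "\<forall>t\<ge>M'. g t = t + of_int m'" by blast
  then have "max M M' + of_int m' = max M M' + of_int m" using assms by (metis max.cobounded1 max.cobounded2)
  then show "m' = m" by simp
qed

lemma alpha_comp: assumes g: "PP g" and h: "PP h" shows "alpha (g \<circ> h) = alpha g + alpha h"
proof -
  obtain mg Mg where tg: "\<forall>t\<le>Mg. g t = t + of_int mg" using g unfolding PP_def by blast
  obtain mh Mh where th: "\<forall>t\<le>Mh. h t = t + of_int mh" using h unfolding PP_def by blast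
  have tl: "\<forall>t\<le>min Mh (Mg - of_int mh). (g \<circ> h) t = t + of_int (mh + mg)"
    using tg th by auto
  show ?thesis using alpha_eq[OF tl] alpha_eq[OF tg] alpha_eq[OF th] by (simp add: o_def)
qed

lemma beta_comp: assumes g: "PP g" and h: "PP h" shows "beta (g \<circ> h) = beta g + beta h"
proof -
  obtain mg Mg where tg: "\<forall>t\<ge>Mg. g t = t + of_int mg" using g unfolding PP_def by blast
  obtain mh Mh where th: "\<forall>t\<ge>Mh. h t = t + of_int mh" using h unfolding PP_def by blast
  have tl: "\<forall>t\<ge>max Mh (Mg - of_int mh). (g \<circ> h) t = t + of_int (mh + mg)"
    using tg th by auto
  show ?thesis using beta_eq[OF tl] beta_eq[OF tg] beta_eq[OF th] by (simp add: o_def)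
qed


lemma bp_sub:
  assumes d: "\<And>x. \<exists>D1 D2. D1 > 0 \<and> D2 > 0 \<and> (g has_real_derivative D1) (at x within {x..}) \<and>
        (g has_real_derivative D2) (at x within {..x}) \<and> (x \<notin> F \<longrightarrow> D1 = D2)"
  shows "{x. dR g x \<noteq> dL g x} \<subseteq> F"
proof
  fix x assume "x \<in> {x. dR g x \<noteq> dL g x}"
  moreover obtain D1 D2 where "D1 > 0 \<and> D2 > 0 \<and> (g has_real_derivative D1) (at x within {x..}) \<and>
      (g has_real_derivative D2) (at x within {..x}) \<and> (x \<notin> F \<longrightarrow> D1 = D2)" using d by blast
  ultimately show "x \<in> F" using dR_eq dL_eq by auto
qed

lemma both_same:
  assumes "(f has_real_derivative D) (at x)" "D > 0" "d > 0" "\<And>t. x - d < t \<Longrightarrow> t < x + d \<Longrightarrow> g t = f t"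
  shows "\<exists>D1 D2. D1 > 0 \<and> D2 > 0 \<and> (g has_real_derivative D1) (at x within {x..}) \<and>
        (g has_real_derivative D2) (at x within {..x}) \<and> (x \<notin> F \<longrightarrow> D1 = D2)"
proof -
  have "(g has_real_derivative D) (at x within {x..})"
    by (rule rderiv[OF assms(1,3)]) (use assms(3,4) in auto)
  moreover have "(g has_real_derivative D) (at x within {..x})"
    by (rule lderiv[OF assms(1,3)]) (use assms(3,4) in auto)
  ultimately show ?thesis using assms(2) by blast
qed

lemma both_diff:
  assumes "(f1 has_real_derivative D1) (at x)" "D1 > 0" "(f2 has_real_derivative D2) (at x)" "D2 > 0" "d > 0"
    "\<And>t. x \<le> t \<Longrightarrow> t < x + d \<Longrightarrow> g t = f1 t" "\<And>t. x - d < t \<Longrightarrow> t \<le> x \<Longrightarrow> g t = f2 t"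
    "x \<notin> F \<longrightarrow> D1 = D2"
  shows "\<exists>D1 D2. D1 > 0 \<and> D2 > 0 \<and> (g has_real_derivative D1) (at x within {x..}) \<and>
        (g has_real_derivative D2) (at x within {..x}) \<and> (x \<notin> F \<longrightarrow> D1 = D2)"
proof -
  have "(g has_real_derivative D1) (at x within {x..})" by (rule rderiv[OF assms(1,5,6)])
  moreover have "(g has_real_derivative D2) (at x within {..x})" by (rule lderiv[OF assms(3,5,7)])
  ultimately show ?thesis using assms(2,4,8) by blast
qed

lemma sqpos: "x \<noteq> (y::real) \<Longrightarrow> 1 / (y - x)^2 > 0" by simp

lemma PP_tau: "PP (tau n)"
proof (rule PP_intro[where F="{}"])
  show "bij (tau n)" by (rule bij_betwI[where g="tau (-n)"]) (auto simp: tau_def)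
  show "mono (tau n)" by (auto intro!: monoI simp: tau_def)
  show "\<exists>D1 D2. D1 > 0 \<and> D2 > 0 \<and> (tau n has_real_derivative D1) (at x within {x..}) \<and>
        (tau n has_real_derivative D2) (at x within {..x}) \<and> (x \<notin> {} \<longrightarrow> D1 = D2)" for x
    by (rule both_same[OF dq3[of "of_int n"], where d=1]) (auto simp: tau_def)
  show "\<exists>m::int. \<exists>M. \<forall>t\<le>M. tau n t = t + of_int m" by (auto simp: tau_def)
  show "\<exists>m::int. \<exists>M. \<forall>t\<ge>M. tau n t = t + of_int m" by (auto simp: tau_def)
qed simp

lemma Gam_tau: "Gam (tau n) = 0"
proof -
  have "{x. dR (tau n) x \<noteq> dL (tau n) x} \<subseteq> {}"
    by (rule bp_sub, rule both_same[OF dq3[of "of_int n"], where d=1]) (auto simp: tau_def)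
  then show ?thesis using Gam_sup[OF PP_tau, of "{}"] by simp
qed

lemma alpha_tau: "alpha (tau n) = n" by (rule alpha_eq[where M=0]) (simp add: tau_def)
lemma beta_tau: "beta (tau n) = n" by (rule beta_eq[where M=0]) (simp add: tau_def)

lemma d_b: "\<exists>D1 D2. D1 > 0 \<and> D2 > 0 \<and> (gen_b has_real_derivative D1) (at x within {x..}) \<and>
        (gen_b has_real_derivative D2) (at x within {..x}) \<and> (x \<notin> {} \<longrightarrow> D1 = D2)"
proof -
  consider "x < 0" | "x = 0" | "0 < x" "x < 1/2" | "x = 1/2" | "1/2 < x" "x < 1" | "x = 1" | "1 < x" by linarith
  then show ?thesis
  proof cases
    case 1 show ?thesis
      by (rule both_same[OF dqid, where d="-x"]) (use 1 in \<open>auto simp: gen_b_def\<close>)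
  next
    case 2 show ?thesis
      by (rule both_diff[OF dq1[of x] _ dqid, where d="1/2"]) (use 2 in \<open>auto simp: gen_b_def\<close>)
  next
    case 3 show ?thesis
      by (rule both_same[OF dq1[of x], where d="min x (1/2 - x)"]) (use 3 in \<open>auto simp: gen_b_def\<close>)
  next
    case 4
    have r: "gen_b t = (3 * t - 1) / t" if "1/2 \<le> t" "t < 1/2 + 1/2" for t
    proof (cases "t = 1/2")
      case True show ?thesis unfolding True by (simp add: gen_b_def)
    next
      case False then show ?thesis using that by (auto simp: gen_b_def)
    qed
    have l: "gen_b t = t / (1 - t)" if "1/2 - 1/2 < t" "t \<le> (1/2::real)" for t
      using that by (auto simp: gen_b_def)
    have "\<exists>D1 D2. D1 > 0 \<and> D2 > 0 \<and> (gen_b has_real_derivative D1) (at (1/2) within {1/2..}) \<and>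
        (gen_b has_real_derivative D2) (at (1/2) within {..1/2}) \<and> ((1/2::real) \<notin> ({}::real set) \<longrightarrow> D1 = D2)"
      by (rule both_diff[where d="1/2", OF dq2[of "1/2"] _ dq1[of "1/2"] _ _ r l]) (auto simp: power2_eq_square)
    then show ?thesis unfolding 4 .
  next
    case 5 show ?thesis
      by (rule both_same[OF dq2[of x], where d="min (x - 1/2) (1 - x)"]) (use 5 in \<open>auto simp: gen_b_def\<close>)
  next
    case 6 show ?thesis
      by (rule both_diff[OF dq3 _ dq2[of x], where d="1/2"]) (use 6 in \<open>auto simp: gen_b_def field_simps\<close>)
  next
    case 7 show ?thesis
      by (rule both_same[OF dq3, where d="x - 1"]) (use 7 in \<open>auto simp: gen_b_def\<close>)
  qed
qed

lemma d_binv: "\<exists>D1 D2. D1 > 0 \<and> D2 > 0 \<and> (binv has_real_derivative D1) (at x within {x..}) \<and>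
        (binv has_real_derivative D2) (at x within {..x}) \<and> (x \<notin> ({0,1,2}::real set) \<longrightarrow> D1 = D2)"
proof -
  consider "x < 0" | "x = 0" | "0 < x" "x < 1" | "x = 1" | "1 < x" "x < 2" | "x = 2" | "2 < x" by linarith
  then show ?thesis
  proof cases
    case 1 show ?thesis
      by (rule both_same[OF dqid, where d="-x"]) (use 1 in \<open>auto simp: binv_def\<close>)
  next
    case 2
    have r: "binv t = t / (1 + t)" if "0 \<le> t" "t < 0 + 1" for t
    proof (cases "t = 0")
      case True show ?thesis unfolding True by (simp add: binv_def)
    next
      case False then show ?thesis using that by (auto simp: binv_def)
    qed
    have l: "binv t = t" if "0 - 1 < t" "t \<le> (0::real)" for t
      using that by (auto simp: binv_def)
    have "\<exists>D1 D2. D1 > 0 \<and> D2 > 0 \<and> (binv has_real_derivative D1) (at 0 within {0..}) \<and>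
        (binv has_real_derivative D2) (at 0 within {..0}) \<and> ((0::real) \<notin> ({0,1,2}::real set) \<longrightarrow> D1 = D2)"
      by (rule both_diff[where d="1", OF dq5[of 0] _ dqid _ _ r l]) (auto simp: power2_eq_square)
    then show ?thesis unfolding 2 .
  next
    case 3 show ?thesis
      by (rule both_same[OF dq5[of x], where d="min x (1 - x)"]) (use 3 in \<open>auto simp: binv_def\<close>)
  next
    case 4
    have r: "binv t = 1 / (3 - t)" if "1 \<le> t" "t < 1 + 1/2" for t
    proof (cases "t = 1")
      case True show ?thesis unfolding True by (simp add: binv_def)
    next
      case False then show ?thesis using that by (auto simp: binv_def)
    qed
    have l: "binv t = t / (1 + t)" if "1 - 1/2 < t" "t \<le> (1::real)" for t
      using that by (auto simp: binv_def)
    have "\<exists>D1 D2. D1 > 0 \<and> D2 > 0 \<and> (binv has_real_derivative D1) (at 1 within {1..}) \<and>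
        (binv has_real_derivative D2) (at 1 within {..1}) \<and> ((1::real) \<notin> ({0,1,2}::real set) \<longrightarrow> D1 = D2)"
      by (rule both_diff[where d="1/2", OF dq6[of 1] _ dq5[of 1] _ _ r l]) (auto simp: power2_eq_square)
    then show ?thesis unfolding 4 .
  next
    case 5 show ?thesis
      by (rule both_same[OF dq6[of x], where d="min (x - 1) (2 - x)"]) (use 5 in \<open>auto simp: binv_def\<close>)
  next
    case 6
    have r: "binv t = t + -1" if "2 \<le> t" "t < 2 + 1/2" for t
    proof (cases "t = 2")
      case True show ?thesis unfolding True by (simp add: binv_def)
    next
      case False then show ?thesis using that by (auto simp: binv_def)
    qed
    have l: "binv t = 1 / (3 - t)" if "2 - 1/2 < t" "t \<le> (2::real)" for t
      using that by (auto simp: binv_def)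
    have "\<exists>D1 D2. D1 > 0 \<and> D2 > 0 \<and> (binv has_real_derivative D1) (at 2 within {2..}) \<and>
        (binv has_real_derivative D2) (at 2 within {..2}) \<and> ((2::real) \<notin> ({0,1,2}::real set) \<longrightarrow> D1 = D2)"
      by (rule both_diff[where d="1/2", OF dq3[of "-1" 2] _ dq6[of 2] _ _ r l]) (auto simp: power2_eq_square)
    then show ?thesis unfolding 6 .
  next
    case 7 show ?thesis
      by (rule both_same[OF dq3[of "-1"], where d="x - 2"]) (use 7 in \<open>auto simp: binv_def\<close>)
  qed
qed

lemma d_c: "\<exists>D1 D2. D1 > 0 \<and> D2 > 0 \<and> (gen_c has_real_derivative D1) (at x within {x..}) \<and>
        (gen_c has_real_derivative D2) (at x within {..x}) \<and> (x \<notin> ({0,1}::real set) \<longrightarrow> D1 = D2)"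
proof -
  consider "x < 0" | "x = 0" | "0 < x" "x < 1" | "x = 1" | "1 < x" by linarith
  then show ?thesis
  proof cases
    case 1 show ?thesis
      by (rule both_same[OF dqid, where d="-x"]) (use 1 in \<open>auto simp: gen_c_def\<close>)
  next
    case 2
    have r: "gen_c t = 2 * t / (t + 1)" if "0 \<le> t" "t < 0 + 1" for t
    proof (cases "t = 0")
      case True show ?thesis unfolding True by (simp add: gen_c_def)
    next
      case False then show ?thesis using that by (auto simp: gen_c_def)
    qed
    have l: "gen_c t = t" if "0 - 1 < t" "t \<le> (0::real)" for t
      using that by (auto simp: gen_c_def)
    have "\<exists>D1 D2. D1 > 0 \<and> D2 > 0 \<and> (gen_c has_real_derivative D1) (at 0 within {0..}) \<and>
        (gen_c has_real_derivative D2) (at 0 within {..0}) \<and> ((0::real) \<notin> ({0,1}::real set) \<longrightarrow> D1 = D2)"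
      by (rule both_diff[where d="1", OF dq4[of 0] _ dqid _ _ r l]) (auto simp: power2_eq_square)
    then show ?thesis unfolding 2 .
  next
    case 3 show ?thesis
      by (rule both_same[OF dq4[of x], where d="min x (1 - x)"]) (use 3 in \<open>auto simp: gen_c_def\<close>)
  next
    case 4
    have r: "gen_c t = t" if "1 \<le> t" "t < 1 + 1" for t
    proof (cases "t = 1")
      case True show ?thesis unfolding True by (simp add: gen_c_def)
    next
      case False then show ?thesis using that by (auto simp: gen_c_def)
    qed
    have l: "gen_c t = 2 * t / (t + 1)" if "1 - 1 < t" "t \<le> (1::real)" for t
      using that by (auto simp: gen_c_def)
    have "\<exists>D1 D2. D1 > 0 \<and> D2 > 0 \<and> (gen_c has_real_derivative D1) (at 1 within {1..}) \<and>
        (gen_c has_real_derivative D2) (at 1 within {..1}) \<and> ((1::real) \<notin> ({0,1}::real set) \<longrightarrow> D1 = D2)"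
      by (rule both_diff[where d="1", OF dqid _ dq4[of 1] _ _ r l]) (auto simp: power2_eq_square)
    then show ?thesis unfolding 4 .
  next
    case 5 show ?thesis
      by (rule both_same[OF dqid, where d="x - 1"]) (use 5 in \<open>auto simp: gen_c_def\<close>)
  qed
qed

lemma d_cinv: "\<exists>D1 D2. D1 > 0 \<and> D2 > 0 \<and> (cinv has_real_derivative D1) (at x within {x..}) \<and>
        (cinv has_real_derivative D2) (at x within {..x}) \<and> (x \<notin> ({0,1}::real set) \<longrightarrow> D1 = D2)"
proof -
  consider "x < 0" | "x = 0" | "0 < x" "x < 1" | "x = 1" | "1 < x" by linarith
  then show ?thesis
  proof cases
    case 1 show ?thesis
      by (rule both_same[OF dqid, where d="-x"]) (use 1 in \<open>auto simp: cinv_def\<close>)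
  next
    case 2
    have r: "cinv t = t / (2 - t)" if "0 \<le> t" "t < 0 + 1" for t
    proof (cases "t = 0")
      case True show ?thesis unfolding True by (simp add: cinv_def)
    next
      case False then show ?thesis using that by (auto simp: cinv_def)
    qed
    have l: "cinv t = t" if "0 - 1 < t" "t \<le> (0::real)" for t
      using that by (auto simp: cinv_def)
    have "\<exists>D1 D2. D1 > 0 \<and> D2 > 0 \<and> (cinv has_real_derivative D1) (at 0 within {0..}) \<and>
        (cinv has_real_derivative D2) (at 0 within {..0}) \<and> ((0::real) \<notin> ({0,1}::real set) \<longrightarrow> D1 = D2)"
      by (rule both_diff[where d="1", OF dq7[of 0] _ dqid _ _ r l]) (auto simp: power2_eq_square)
    then show ?thesis unfolding 2 .
  next
    case 3 show ?thesis
      by (rule both_same[OF dq7[of x], where d="min x (1 - x)"]) (use 3 in \<open>auto simp: cinv_def\<close>)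
  next
    case 4
    have r: "cinv t = t" if "1 \<le> t" "t < 1 + 1" for t
    proof (cases "t = 1")
      case True show ?thesis unfolding True by (simp add: cinv_def)
    next
      case False then show ?thesis using that by (auto simp: cinv_def)
    qed
    have l: "cinv t = t / (2 - t)" if "1 - 1 < t" "t \<le> (1::real)" for t
      using that by (auto simp: cinv_def)
    have "\<exists>D1 D2. D1 > 0 \<and> D2 > 0 \<and> (cinv has_real_derivative D1) (at 1 within {1..}) \<and>
        (cinv has_real_derivative D2) (at 1 within {..1}) \<and> ((1::real) \<notin> ({0,1}::real set) \<longrightarrow> D1 = D2)"
      by (rule both_diff[where d="1", OF dqid _ dq7[of 1] _ _ r l]) (auto simp: power2_eq_square)
    then show ?thesis unfolding 4 .
  next
    case 5 show ?thesis
      by (rule both_same[OF dqid, where d="x - 1"]) (use 5 in \<open>auto simp: cinv_def\<close>)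
  qed
qed


lemma trans_ex: "\<forall>t\<le>M. g t = t + of_int m \<Longrightarrow> \<exists>m::int. \<exists>M. \<forall>t\<le>M. g t = t + of_int m" by blast
lemma trans_ex': "\<forall>t\<ge>M. g t = t + of_int m \<Longrightarrow> \<exists>m::int. \<exists>M. \<forall>t\<ge>M. g t = t + of_int m" by blast

lemma bL: "\<forall>t\<le>0. gen_b t = t + of_int 0" by (simp add: gen_b_def)
lemma bRr: "\<forall>t\<ge>1. gen_b t = t + of_int 1" by (auto simp: gen_b_def)
lemma biL: "\<forall>t\<le>0. binv t = t + of_int 0" by (simp add: binv_def)
lemma biR: "\<forall>t\<ge>2. binv t = t + of_int (-1)" by (auto simp: binv_def)
lemma cL: "\<forall>t\<le>0. gen_c t = t + of_int 0" by (auto simp: gen_c_def)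
lemma cRr: "\<forall>t\<ge>1. gen_c t = t + of_int 0" by (auto simp: gen_c_def)
lemma ciL: "\<forall>t\<le>0. cinv t = t + of_int 0" by (auto simp: cinv_def)
lemma ciR: "\<forall>t\<ge>1. cinv t = t + of_int 0" by (auto simp: cinv_def)

lemma PP_b: "PP gen_b" by (rule PP_intro[OF bij_b mono_b _ d_b trans_ex[OF bL] trans_ex'[OF bRr]]) simp
lemma PP_binv: "PP binv"
  by (rule PP_intro[OF _ _ _ d_binv trans_ex[OF biL] trans_ex'[OF biR]])
     (use bij_b mono_b mono_inv[OF bij_b mono_b] inv_b bij_betwI[of binv UNIV UNIV gen_b] b_binv binv_b in auto)
lemma PP_c: "PP gen_c" by (rule PP_intro[OF bij_c mono_c _ d_c trans_ex[OF cL] trans_ex'[OF cRr]]) simp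
lemma PP_cinv: "PP cinv"
  by (rule PP_intro[OF _ _ _ d_cinv trans_ex[OF ciL] trans_ex'[OF ciR]])
     (use bij_c mono_c mono_inv[OF bij_c mono_c] inv_c bij_betwI[of cinv UNIV UNIV gen_c] c_cinv cinv_c in auto)

lemma a_tau: "gen_a = tau 1" by (auto simp: tau_def gen_a_def)
lemma ai_tau: "(\<lambda>t. t - 1) = tau (-1)" by (auto simp: tau_def)
lemma id_tau: "id = tau 0" by (auto simp: tau_def)

lemma Gam_b: "Gam gen_b = 0"
  using Gam_sup[OF PP_b, of "{}"] bp_sub[OF d_b] by simp

lemma Gam_c: "Gam gen_c = 2 * ln 2"
proof -
  have "Gam gen_c = (\<Sum>x\<in>{0,1}. Lam gen_c x)" using Gam_sup[OF PP_c, of "{0,1}"] bp_sub[OF d_c] by simp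
  also have "\<dots> = Lam gen_c 0 + Lam gen_c 1" by simp
  also have "Lam gen_c 0 = ln 2"
  proof -
    have "(gen_c has_real_derivative 2 / (0 + 1)^2) (at 0 within {0..})"
      by (rule rderiv[OF dq4[of 0], where d=1]) (auto simp: gen_c_def)
    then have r: "dR gen_c 0 = 2" using dR_eq by simp
    have "(gen_c has_real_derivative 1) (at 0 within {..0})"
      by (rule lderiv[OF dqid, where d=1]) (auto simp: gen_c_def)
    then have l: "dL gen_c 0 = 1" using dL_eq by simp
    show ?thesis by (simp add: Lam_def r l)
  qed
  also have "Lam gen_c 1 = ln 2"
  proof -
    have "(gen_c has_real_derivative 1) (at 1 within {1..})"
      by (rule rderiv[OF dqid, where d=1]) (auto simp: gen_c_def)
    then have r: "dR gen_c 1 = 1" using dR_eq by simp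
    have "(gen_c has_real_derivative 2 / (1 + 1)^2) (at 1 within {..1})"
      by (rule lderiv[OF dq4[of 1], where d=1]) (auto simp: gen_c_def)
    then have l: "dL gen_c 1 = 1/2" using dL_eq by (simp add: power2_eq_square)
    show ?thesis by (simp add: Lam_def r l ln_div)
  qed
  finally show ?thesis by simp
qed

lemma Gam_binv: "Gam binv = 0"
proof -
  have "gen_b \<circ> binv = tau 0" by (auto simp: tau_def b_binv)
  then have "Gam gen_b + Gam binv = 0" using Gam_comp[OF PP_b PP_binv] Gam_tau by simp
  then show ?thesis using Gam_b by simp
qed

lemma Gam_cinv: "Gam cinv = - (2 * ln 2)"
proof -
  have "gen_c \<circ> cinv = tau 0" by (auto simp: tau_def c_cinv)
  then have "Gam gen_c + Gam cinv = 0" using Gam_comp[OF PP_c PP_cinv] Gam_tau by simp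
  then show ?thesis using Gam_c by simp
qed

definition LL :: real where "LL = 2 * ln 2"
lemma LL_pos: "LL > 0" by (simp add: LL_def)

lemma C0_PP: "g \<in> carrier G0 \<Longrightarrow> PP g \<and> (\<exists>k::int. Gam g = of_int k * LL)"
proof -
  assume "g \<in> carrier G0"
  then have "g \<in> generate BR gens" by (simp add: carrier_G0)
  then show ?thesis
  proof (induction g rule: generate.induct)
    case one
    show ?case unfolding one_BR id_tau using PP_tau Gam_tau by (metis mult_zero_left of_int_0)
  next
    case (incl h)
    then consider "h = gen_a" | "h = gen_b" | "h = gen_c" by blast
    then show ?case
    proof cases
      case 1 then show ?thesis using PP_tau Gam_tau a_tau by (metis mult_zero_left of_int_0)
    next
      case 2 then show ?thesis using PP_b Gam_b by (metis mult_zero_left of_int_0)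
    next
      case 3 then show ?thesis using PP_c Gam_c LL_def by (metis mult_1 of_int_1)
    qed
  next
    case (inv h)
    then consider "h = gen_a" | "h = gen_b" | "h = gen_c" by blast
    then show ?case
    proof cases
      case 1 then show ?thesis using PP_tau Gam_tau inv_BR[OF bij_a] inv_a ai_tau by (metis mult_zero_left of_int_0)
    next
      case 2 then show ?thesis using PP_binv Gam_binv inv_BR[OF bij_b] inv_b by (metis mult_zero_left of_int_0)
    next
      case 3
      have "Gam cinv = of_int (-1) * LL" using Gam_cinv by (simp add: LL_def)
      then show ?thesis using PP_cinv inv_BR[OF bij_c] inv_c 3 by metis
    qed
  next
    case (eng h1 h2)
    then obtain k1 k2 where k: "Gam h1 = of_int k1 * LL" "Gam h2 = of_int k2 * LL" "PP h1" "PP h2" by blast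
    have m: "h1 \<otimes>\<^bsub>BR\<^esub> h2 = h1 \<circ> h2" using mult_BR PP_bij k(3,4) by blast
    have "Gam (h1 \<circ> h2) = of_int (k1 + k2) * LL" using Gam_comp[OF k(3,4)] k(1,2) by (simp add: algebra_simps)
    then show ?case unfolding m using PP_comp[OF k(3,4)] by blast
  qed
qed

definition ab :: "(real \<Rightarrow> real) \<Rightarrow> int \<times> int \<times> int" where
  "ab g = (alpha g, beta g - alpha g, \<lfloor>Gam g / LL\<rfloor>)"

lemma floor_LL: "\<lfloor>(of_int k * LL) / LL\<rfloor> = k" using LL_pos by simp

lemma ab_mult: assumes g: "g \<in> carrier G0" and h: "h \<in> carrier G0"
  shows "ab (g \<circ> h) = (fst (ab g) + fst (ab h), fst (snd (ab g)) + fst (snd (ab h)), snd (snd (ab g)) + snd (snd (ab h)))"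
proof -
  obtain kg kh where k: "Gam g = of_int kg * LL" "Gam h = of_int kh * LL" "PP g" "PP h" using C0_PP g h by blast
  have "Gam (g \<circ> h) = of_int (kg + kh) * LL" using Gam_comp[OF k(3,4)] k(1,2) by (simp add: algebra_simps)
  then show ?thesis unfolding ab_def using alpha_comp[OF k(3,4)] beta_comp[OF k(3,4)] k(1,2) LL_pos
    by simp
qed

lemma ab_a: "ab gen_a = (1, 0, 0)" unfolding ab_def a_tau alpha_tau beta_tau Gam_tau by simp
lemma ab_b: "ab gen_b = (0, 1, 0)"
  unfolding ab_def using alpha_eq[OF bL] beta_eq[OF bRr] Gam_b by simp
lemma ab_c: "ab gen_c = (0, 0, 1)"
  unfolding ab_def using alpha_eq[OF cL] beta_eq[OF cRr] Gam_c LL_pos by (simp add: LL_def)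


lemma Z3_simps: "carrier Z3 = UNIV" "x \<otimes>\<^bsub>Z3\<^esub> y = (fst x + fst y, fst (snd x) + fst (snd y), snd (snd x) + snd (snd y))"
  "\<one>\<^bsub>Z3\<^esub> = (0,0,0)" by (simp_all add: Z3_def)

lemma Z3_comm: "comm_group Z3"
proof (rule comm_groupI)
  fix x assume "x \<in> carrier Z3"
  show "\<exists>y\<in>carrier Z3. y \<otimes>\<^bsub>Z3\<^esub> x = \<one>\<^bsub>Z3\<^esub>"
    by (rule bexI[where x="(- fst x, - fst (snd x), - snd (snd x))"]) (simp_all add: Z3_simps)
qed (auto simp: Z3_simps)

lemma Z3_grp: "group Z3" using Z3_comm by (simp add: comm_group_def)

lemma Z3_inv: "inv\<^bsub>Z3\<^esub> x = (- fst x, - fst (snd x), - snd (snd x))"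
  by (rule group.inv_equality[OF Z3_grp]) (simp_all add: Z3_simps)

lemma ab_hom: "ab \<in> hom G0 Z3"
  unfolding hom_def using ab_mult mult_G0 by (auto simp: Z3_simps)

lemma ab_gh: "group_hom G0 Z3 ab"
  by (rule group_hom.intro[OF grp Z3_grp]) (simp add: group_hom_axioms_def ab_hom)

lemma ab_surj: "ab ` carrier G0 = UNIV"
proof -
  interpret h: group_hom G0 Z3 ab by (rule ab_gh)
  interpret Z: group Z3 by (rule Z3_grp)
  define S where "S = ab ` carrier G0"
  have S: "subgroup S Z3" unfolding S_def by (rule h.img_is_subgroup)
  have e: "(1,0,0) \<in> S" "(0,1,0) \<in> S" "(0,0,1) \<in> S"
    using ab_a ab_b ab_c gens_G0 unfolding S_def by (metis imageI)+
  note sub = subgroup.m_closed[OF S] subgroup.m_inv_closed[OF S] subgroup.one_closed[OF S]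
  have one: "(0,0,0) \<in> S" using sub(3) by (simp add: Z3_simps)
  have l1: "(i,0,0) \<in> S" for i :: int
  proof (induction i rule: int_induct[where k=0])
    case base show ?case using one by simp
  next
    case (step1 i) show ?case using sub(1)[OF step1(2) e(1)] by (simp add: Z3_simps)
  next
    case (step2 i) show ?case using sub(1)[OF step2(2) sub(2)[OF e(1)]] by (simp add: Z3_simps Z3_inv)
  qed
  have l2: "(0,j,0) \<in> S" for j :: int
  proof (induction j rule: int_induct[where k=0])
    case base show ?case using one by simp
  next
    case (step1 i) show ?case using sub(1)[OF step1(2) e(2)] by (simp add: Z3_simps)
  next
    case (step2 i) show ?case using sub(1)[OF step2(2) sub(2)[OF e(2)]] by (simp add: Z3_simps Z3_inv)
  qed
  have l3: "(0,0,k) \<in> S" for k :: int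
  proof (induction k rule: int_induct[where k=0])
    case base show ?case using one by simp
  next
    case (step1 i) show ?case using sub(1)[OF step1(2) e(3)] by (simp add: Z3_simps)
  next
    case (step2 i) show ?case using sub(1)[OF step2(2) sub(2)[OF e(3)]] by (simp add: Z3_simps Z3_inv)
  qed
  have "v \<in> S" for v :: "int \<times> int \<times> int"
  proof -
    obtain i j k where v: "v = (i,j,k)" by (cases v) auto
    show ?thesis using sub(1)[OF sub(1)[OF l1[of i] l2[of j]] l3[of k]] v by (simp add: Z3_simps)
  qed
  then show ?thesis unfolding S_def by auto
qed


lemma ker_ab: assumes g: "g \<in> carrier G0" and z: "ab g = (0,0,0)" shows "g \<in> D0"
proof -
  interpret G: group G0 by (rule grp)
  interpret N: normal D0 G0 by (rule D0_normal)
  define Q where "Q = G0 Mod D0"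
  interpret Q: comm_group Q unfolding Q_def by (rule G.derived_quot_is_comm_group)
  define \<pi> where "\<pi> = (\<lambda>x. D0 #>\<^bsub>G0\<^esub> x)"
  have ph: "\<pi> \<in> hom G0 Q" unfolding \<pi>_def Q_def by (rule N.r_coset_hom_Mod)
  interpret P: group_hom G0 Q \<pi> by (rule group_hom.intro[OF grp Q.is_group]) (simp add: group_hom_axioms_def ph)
  interpret h: group_hom G0 Z3 ab by (rule ab_gh)
  define F where "F = (\<lambda>v::int\<times>int\<times>int. (\<pi> gen_a) [^]\<^bsub>Q\<^esub> fst v \<otimes>\<^bsub>Q\<^esub> (\<pi> gen_b) [^]\<^bsub>Q\<^esub> fst (snd v)
        \<otimes>\<^bsub>Q\<^esub> (\<pi> gen_c) [^]\<^bsub>Q\<^esub> snd (snd v))"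
  have pC: "\<pi> gen_a \<in> carrier Q" "\<pi> gen_b \<in> carrier Q" "\<pi> gen_c \<in> carrier Q"
    using gens_G0 by auto
  have Fadd: "F (u \<otimes>\<^bsub>Z3\<^esub> v) = F u \<otimes>\<^bsub>Q\<^esub> F v" for u v
    unfolding F_def Z3_simps using pC by (simp add: Q.int_pow_mult Q.m_ac)
  have Fneg: "F (inv\<^bsub>Z3\<^esub> u) = inv\<^bsub>Q\<^esub> (F u)" for u
  proof -
    have "F (inv\<^bsub>Z3\<^esub> u) \<otimes>\<^bsub>Q\<^esub> F u = \<one>\<^bsub>Q\<^esub>"
      using Fadd[of "inv\<^bsub>Z3\<^esub> u" u] group.l_inv[OF Z3_grp, of u] pC
      by (simp add: Z3_simps F_def)
    moreover have "F u \<in> carrier Q" "F (inv\<^bsub>Z3\<^esub> u) \<in> carrier Q" using pC by (simp_all add: F_def)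
    ultimately show ?thesis by (metis Q.inv_equality)
  qed
  have F0: "F (0,0,0) = \<one>\<^bsub>Q\<^esub>" using pC by (simp add: F_def)
  have claim: "\<pi> x = F (ab x)" if "x \<in> carrier G0" for x
  proof -
    have "x \<in> generate G0 gens" using that gen_G0 by simp
    then show ?thesis
    proof (induction x rule: generate.induct)
      case one
      show ?case using h.hom_one P.hom_one F0 by (simp add: Z3_simps)
    next
      case (incl x)
      then show ?case using ab_a ab_b ab_c pC by (auto simp: F_def)
    next
      case (inv x)
      then have xc: "x \<in> carrier G0" using gens_G0 by auto
      have "\<pi> x = F (ab x)" using inv ab_a ab_b ab_c pC by (auto simp: F_def)
      then show ?case using P.hom_inv[OF xc] h.hom_inv[OF xc] Fneg by simp
    next
      case (eng x y)
      then have c: "x \<in> carrier G0" "y \<in> carrier G0" using gen_G0 by auto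
      show ?case using eng.IH P.hom_mult[OF c] h.hom_mult[OF c] Fadd by simp
    qed
  qed
  have "\<pi> g = D0" using claim[OF g] z F0 by (simp add: Q_def FactGroup_def)
  then show ?thesis using G.rcos_self[OF g N.subgroup_axioms] by (simp add: \<pi>_def)
qed


lemma img_coset: assumes K: "K \<subseteq> carrier G0" and g: "g \<in> carrier G0"
  shows "ab ` (K #>\<^bsub>G0\<^esub> g) = (ab ` K) #>\<^bsub>Z3\<^esub> (ab g)"
proof -
  interpret h: group_hom G0 Z3 ab by (rule ab_gh)
  have "ab (k \<otimes>\<^bsub>G0\<^esub> g) = ab k \<otimes>\<^bsub>Z3\<^esub> ab g" if "k \<in> K" for k using that K g by auto
  then show ?thesis unfolding r_coset_def by (auto simp: image_iff)
qed

lemma ab_zero: "g \<in> carrier G0 \<Longrightarrow> k \<in> carrier G0 \<Longrightarrow> ab g = ab k \<Longrightarrow> ab (g \<otimes>\<^bsub>G0\<^esub> inv\<^bsub>G0\<^esub> k) = (0,0,0)"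
proof -
  assume g: "g \<in> carrier G0" and k: "k \<in> carrier G0" and e: "ab g = ab k"
  interpret h: group_hom G0 Z3 ab by (rule ab_gh)
  interpret G: group G0 by (rule grp)
  show ?thesis using h.hom_mult[OF g group.inv_closed[OF grp k]] h.hom_inv[OF k] e by (simp add: Z3_inv Z3_simps)
qed

lemma K_pre: assumes K: "fin_index_subgroup G0 K" shows "K = {g \<in> carrier G0. ab g \<in> ab ` K}"
proof -
  interpret G: group G0 by (rule grp)
  have Ks: "subgroup K G0" using K by (simp add: fin_index_subgroup_def)
  interpret K: subgroup K G0 by (rule Ks)
  have DK: "D0 \<subseteq> K" by (rule D0_in_fin_index[OF K])
  show ?thesis
  proof
    show "K \<subseteq> {g \<in> carrier G0. ab g \<in> ab ` K}" using K.subset by auto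
    show "{g \<in> carrier G0. ab g \<in> ab ` K} \<subseteq> K"
    proof
      fix g assume "g \<in> {g \<in> carrier G0. ab g \<in> ab ` K}"
      then obtain k where g: "g \<in> carrier G0" and k: "k \<in> K" "ab g = ab k" by auto
      have kc: "k \<in> carrier G0" using k K.subset by auto
      have "g \<otimes>\<^bsub>G0\<^esub> inv\<^bsub>G0\<^esub> k \<in> K" using ker_ab[OF _ ab_zero[OF g kc k(2)]] g kc DK by auto
      then have "(g \<otimes>\<^bsub>G0\<^esub> inv\<^bsub>G0\<^esub> k) \<otimes>\<^bsub>G0\<^esub> k \<in> K" using k(1) by (rule K.m_closed)
      then show "g \<in> K" using g kc by (simp add: G.m_assoc)
    qed
  qed
qed

lemma map_fin: assumes K: "fin_index_subgroup G0 K" shows "fin_index_subgroup Z3 (ab ` K)"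
proof -
  interpret h: group_hom G0 Z3 ab by (rule ab_gh)
  have Ks: "subgroup K G0" and fin: "finite (rcosets\<^bsub>G0\<^esub> K)" using K by (auto simp: fin_index_subgroup_def)
  have KC: "K \<subseteq> carrier G0" using Ks subgroup.subset by blast
  have "rcosets\<^bsub>Z3\<^esub> (ab ` K) \<subseteq> (\<lambda>C. ab ` C) ` (rcosets\<^bsub>G0\<^esub> K)"
  proof
    fix R assume "R \<in> rcosets\<^bsub>Z3\<^esub> (ab ` K)"
    then obtain z where R: "R = (ab ` K) #>\<^bsub>Z3\<^esub> z" by (auto simp: RCOSETS_def)
    obtain g where g: "g \<in> carrier G0" "z = ab g" using ab_surj by (metis UNIV_I imageE)
    have "R = ab ` (K #>\<^bsub>G0\<^esub> g)" using img_coset[OF KC g(1)] R g(2) by simp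
    moreover have "K #>\<^bsub>G0\<^esub> g \<in> rcosets\<^bsub>G0\<^esub> K" using g(1) by (auto simp: RCOSETS_def)
    ultimately show "R \<in> (\<lambda>C. ab ` C) ` (rcosets\<^bsub>G0\<^esub> K)" by blast
  qed
  then have "finite (rcosets\<^bsub>Z3\<^esub> (ab ` K))" using fin finite_subset by blast
  then show ?thesis using h.subgroup_img_is_subgroup[OF Ks] by (simp add: fin_index_subgroup_def)
qed

lemma map_surj: assumes H: "fin_index_subgroup Z3 H" shows "\<exists>K. fin_index_subgroup G0 K \<and> H = ab ` K"
proof -
  interpret G: group G0 by (rule grp)
  interpret Z: group Z3 by (rule Z3_grp)
  interpret h: group_hom G0 Z3 ab by (rule ab_gh)
  have Hs: "subgroup H Z3" and fin: "finite (rcosets\<^bsub>Z3\<^esub> H)" using H by (auto simp: fin_index_subgroup_def)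
  interpret H: subgroup H Z3 by (rule Hs)
  define K where "K = {g \<in> carrier G0. ab g \<in> H}"
  have KC: "K \<subseteq> carrier G0" by (auto simp: K_def)
  have Ks: "subgroup K G0"
  proof (rule G.subgroupI[OF KC])
    show "K \<noteq> {}" using H.one_closed G.one_closed h.hom_one unfolding K_def by (metis (mono_tags, lifting) empty_iff mem_Collect_eq)
    show "inv\<^bsub>G0\<^esub> a \<in> K" if "a \<in> K" for a using that h.hom_inv H.m_inv_closed by (auto simp: K_def)
    show "a \<otimes>\<^bsub>G0\<^esub> b \<in> K" if "a \<in> K" "b \<in> K" for a b using that h.hom_mult H.m_closed by (auto simp: K_def)
  qed
  have img: "ab ` K = H"
  proof
    show "ab ` K \<subseteq> H" by (auto simp: K_def)
    show "H \<subseteq> ab ` K"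
    proof
      fix z assume "z \<in> H"
      obtain g where g: "g \<in> carrier G0" "z = ab g" using ab_surj by (metis UNIV_I imageE)
      then show "z \<in> ab ` K" using \<open>z \<in> H\<close> by (auto simp: K_def)
    qed
  qed
  have inj: "inj_on (\<lambda>C. ab ` C) (rcosets\<^bsub>G0\<^esub> K)"
  proof (rule inj_onI)
    fix C1 C2 assume C1: "C1 \<in> rcosets\<^bsub>G0\<^esub> K" and C2: "C2 \<in> rcosets\<^bsub>G0\<^esub> K" and e: "ab ` C1 = ab ` C2"
    obtain g1 where g1: "g1 \<in> carrier G0" "C1 = K #>\<^bsub>G0\<^esub> g1" using C1 by (auto simp: RCOSETS_def)
    obtain g2 where g2: "g2 \<in> carrier G0" "C2 = K #>\<^bsub>G0\<^esub> g2" using C2 by (auto simp: RCOSETS_def)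
    have "H #>\<^bsub>Z3\<^esub> ab g1 = H #>\<^bsub>Z3\<^esub> ab g2" using e img_coset[OF KC g1(1)] img_coset[OF KC g2(1)] g1 g2 img by simp
    then have "ab g1 \<in> H #>\<^bsub>Z3\<^esub> ab g2" using Z.rcos_self[OF _ Hs, of "ab g1"] by (simp add: Z3_simps)
    then have "ab g1 \<otimes>\<^bsub>Z3\<^esub> inv\<^bsub>Z3\<^esub> ab g2 \<in> H" using H.rcos_module_imp[OF Z3_grp] by (simp add: Z3_simps)
    then have "g1 \<otimes>\<^bsub>G0\<^esub> inv\<^bsub>G0\<^esub> g2 \<in> K" using g1 g2 h.hom_mult h.hom_inv by (simp add: K_def)
    then have "g1 \<in> K #>\<^bsub>G0\<^esub> g2" using subgroup.rcos_module_rev[OF Ks grp g2(1) g1(1)] by simp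
    then have "K #>\<^bsub>G0\<^esub> g2 = K #>\<^bsub>G0\<^esub> g1" using G.repr_independence[OF _ g2(1) Ks] by simp
    then show "C1 = C2" using g1 g2 by simp
  qed
  have "(\<lambda>C. ab ` C) ` (rcosets\<^bsub>G0\<^esub> K) \<subseteq> rcosets\<^bsub>Z3\<^esub> H"
  proof
    fix R assume "R \<in> (\<lambda>C. ab ` C) ` (rcosets\<^bsub>G0\<^esub> K)"
    then obtain g where g: "g \<in> carrier G0" "R = ab ` (K #>\<^bsub>G0\<^esub> g)" by (auto simp: RCOSETS_def)
    then have "R = H #>\<^bsub>Z3\<^esub> ab g" using img_coset[OF KC g(1)] img by simp
    then show "R \<in> rcosets\<^bsub>Z3\<^esub> H" unfolding RCOSETS_def Z3_simps by blast
  qed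
  then have "finite ((\<lambda>C. ab ` C) ` (rcosets\<^bsub>G0\<^esub> K))" using fin finite_subset by blast
  then have "finite (rcosets\<^bsub>G0\<^esub> K)" using finite_imageD inj by blast
  then show ?thesis using Ks img by (auto simp: fin_index_subgroup_def)
qed

theorem mainTheorem6:
  shows "(\<exists>ab. ab \<in> hom G0 Z3 \<and> ab gen_a = (1, 0, 0) \<and> ab gen_b = (0, 1, 0) \<and> ab gen_c = (0, 0, 1)
            \<and> bij_betw (\<lambda>K. ab ` K) {K. fin_index_subgroup G0 K} {H. fin_index_subgroup Z3 H})
         \<and> (\<forall>K. fin_index_subgroup G0 K \<longrightarrow>
               K \<lhd> G0 \<and> derived G0 K = derived G0 (carrier G0))"
proof
  have "bij_betw (\<lambda>K. ab ` K) {K. fin_index_subgroup G0 K} {H. fin_index_subgroup Z3 H}"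
    unfolding bij_betw_def
  proof
    show "inj_on (\<lambda>K. ab ` K) {K. fin_index_subgroup G0 K}"
    proof (rule inj_onI)
      fix K1 K2 assume "K1 \<in> {K. fin_index_subgroup G0 K}" "K2 \<in> {K. fin_index_subgroup G0 K}" "ab ` K1 = ab ` K2"
      then have "fin_index_subgroup G0 K1" "fin_index_subgroup G0 K2" "ab ` K1 = ab ` K2" by auto
      then show "K1 = K2" using K_pre[of K1] K_pre[of K2] by simp
    qed
    show "(\<lambda>K. ab ` K) ` {K. fin_index_subgroup G0 K} = {H. fin_index_subgroup Z3 H}"
    proof
      show "(\<lambda>K. ab ` K) ` {K. fin_index_subgroup G0 K} \<subseteq> {H. fin_index_subgroup Z3 H}"
        using map_fin by auto
      show "{H. fin_index_subgroup Z3 H} \<subseteq> (\<lambda>K. ab ` K) ` {K. fin_index_subgroup G0 K}"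
      proof
        fix H assume "H \<in> {H. fin_index_subgroup Z3 H}"
        then have "fin_index_subgroup Z3 H" by simp
        then obtain K where "fin_index_subgroup G0 K" "H = ab ` K" using map_surj by blast
        then show "H \<in> (\<lambda>K. ab ` K) ` {K. fin_index_subgroup G0 K}" by auto
      qed
    qed
  qed
  then show "\<exists>ab. ab \<in> hom G0 Z3 \<and> ab gen_a = (1, 0, 0) \<and> ab gen_b = (0, 1, 0) \<and> ab gen_c = (0, 0, 1)
            \<and> bij_betw (\<lambda>K. ab ` K) {K. fin_index_subgroup G0 K} {H. fin_index_subgroup Z3 H}"
    using ab_hom ab_a ab_b ab_c by (intro exI[of _ ab]) simp
  show "\<forall>K. fin_index_subgroup G0 K \<longrightarrow> K \<lhd> G0 \<and> derived G0 K = derived G0 (carrier G0)"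
    using part2 by simp
qed


end
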